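(* Let $m\in\mathbb{N}$ and let $V_{n}(x)$, $n\in\mathbb{N}$, and $V(x)$ be 1-periodic complex-valued distributions in the Sobolev space $H_{+}^{-m}$ such that $V_{n}\to V$ in $H_{+}^{-m}$ as $n\to\infty$. Then the operators \[ S_{\pm}^{(n)}\equiv S_{\pm}(V_{n}):=D_{\pm}^{2m}\dotplus V_{n}(x),\qquad \mathrm{Dom}(S_{\pm}^{(n)})=\{u\in H_{\pm}^{m}\,|\,D_{\pm}^{2m}u+V_{n}(x)u\in L_{2}(0,1)\}, \] converge to the operators \[ S_{\pm}\equiv S_{\pm}(V)=D_{\pm}^{2m}\dotplus V(x),\qquad \mathrm{Dom}(S_{\pm})=\{u\in H_{\pm}^{m}\,|\,D_{\pm}^{2m}u+V(x)u\in L_{2}(0,1)\}, \] in the generalized convergence sense for closed operators (convergence in the gap metric between closed operators, as in Kato's Perturbation Theory for Linear Operators).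
   Context: Work in the Hilbert space $L_{2}(0,1)$. For $s\in\mathbb{R}$, $H_{+}^{s}$ (resp. $H_{-}^{s}$) is the Sobolev space of 1-periodic (resp. 1-semiperiodic) functions/distributions $f=\sum_{k\in\mathbb{Z}}\widehat f(2k)e^{i2k\pi x}$ (resp. $f=\sum_{k}\widehat f(2k+1)e^{i(2k+1)\pi x}$) with norm $\big(\sum_k\langle 2k\rangle^{2s}|\widehat f(2k)|^2\big)^{1/2}$ (resp. $\big(\sum_k\langle 2k+1\rangle^{2s}|\widehat f(2k+1)|^2\big)^{1/2}$), $\langle k\rangle=1+|k|$. $D_{\pm}=-i\,d/dx$ with domain $H_{\pm}^{1}$, $D_{\pm}^{2m}:=|D_{\pm}|^{2m}$ with domain $H_{\pm}^{2m}$. $\langle\cdot,\cdot\rangle_{\pm}$ is the pairing between $H_{\pm}^{s}$ and $H_{\pm}^{-s}$ extending the $L_2(0,1)$ inner product. For $V\in H_{+}^{-m}$ the form-sum $S_{\pm}(V)=D_{\pm}^{2m}\dotplus V(x)$ is the m-sectorial operator associated (first representation theorem) with the closed densely defined sectorial form $t_{\pm}[u,v]=\langle D_{\pm}^{2m}u,v\rangle_{\pm}+\langle V(x)u,v\rangle_{\pm}$, $\mathrm{Dom}(t_{\pm})=H_{\pm}^{m}$; here $V(x)u$ is the formal product of Fourier series, which converges in $H_{\pm}^{-m}$ for $u\in H_{\pm}^{m}$ by the convolution lemma. *)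

theory Defs
  imports "HOL-Analysis.Analysis"
begin

text \<open>
  A function/distribution
  on (0,1) is represented by its coefficient sequence f :: int => complex,
  where f n is the coefficient of exp(i n pi x).  1-periodic objects have
  coefficients supported on even n, 1-semiperiodic ones on odd n.
  The parity flag pl = True stands for the sign +, pl = False for -.
  L_2(0,1) is identified (unitarily, via the orthonormal basis
  exp(i n pi x), n even resp. n odd) with H^0_+ resp. H^0_-.
\<close>

definition bracket :: "int \<Rightarrow> real" where
  "bracket n = 1 + real_of_int \<bar>n\<bar>"

definition parity_ok :: "bool \<Rightarrow> int \<Rightarrow> bool" where
  "parity_ok pl n = (if pl then even n else odd n)"

definition sobolev :: "bool \<Rightarrow> real \<Rightarrow> (int \<Rightarrow> complex) set" where
  "sobolev pl s = {f. (\<forall>n. f n \<noteq> 0 \<longrightarrow> parity_ok pl n) \<and>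
       (\<lambda>n. bracket n powr (2 * s) * (cmod (f n))\<^sup>2) summable_on UNIV}"

definition sob_norm :: "real \<Rightarrow> (int \<Rightarrow> complex) \<Rightarrow> real" where
  "sob_norm s f = sqrt (\<Sum>\<^sub>\<infinity>n. bracket n powr (2 * s) * (cmod (f n))\<^sup>2)"

text \<open>D^{2m} = |D|^{2m}, D = -i d/dx: multiplies the coefficient of
  exp(i n pi x) by |n pi|^{2m}.\<close>
definition Dpow :: "nat \<Rightarrow> (int \<Rightarrow> complex) \<Rightarrow> (int \<Rightarrow> complex)" where
  "Dpow m u = (\<lambda>n. complex_of_real ((pi * real_of_int \<bar>n\<bar>) ^ (2 * m)) * u n)"

text \<open>Formal product V(x)u of Fourier series (convolution of coefficients).\<close>
definition fmult :: "(int \<Rightarrow> complex) \<Rightarrow> (int \<Rightarrow> complex) \<Rightarrow> (int \<Rightarrow> complex)" where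
  "fmult V u = (\<lambda>n. \<Sum>\<^sub>\<infinity>l. V (n - l) * u l)"

definition S_dom :: "bool \<Rightarrow> nat \<Rightarrow> (int \<Rightarrow> complex) \<Rightarrow> (int \<Rightarrow> complex) set" where
  "S_dom pl m V = {u \<in> sobolev pl (real m).
       (\<lambda>n. Dpow m u n + fmult V u n) \<in> sobolev pl 0}"

definition S_graph :: "bool \<Rightarrow> nat \<Rightarrow> (int \<Rightarrow> complex)
      \<Rightarrow> ((int \<Rightarrow> complex) \<times> (int \<Rightarrow> complex)) set" where
  "S_graph pl m V = {(u, (\<lambda>n. Dpow m u n + fmult V u n)) | u. u \<in> S_dom pl m V}"

definition l2sq :: "(int \<Rightarrow> complex) \<Rightarrow> real" where
  "l2sq f = (\<Sum>\<^sub>\<infinity>n. (cmod (f n))\<^sup>2)"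

definition pnorm :: "(int \<Rightarrow> complex) \<times> (int \<Rightarrow> complex) \<Rightarrow> real" where
  "pnorm x = sqrt (l2sq (fst x) + l2sq (snd x))"

definition pdiff :: "(int \<Rightarrow> complex) \<times> (int \<Rightarrow> complex)
     \<Rightarrow> (int \<Rightarrow> complex) \<times> (int \<Rightarrow> complex) \<Rightarrow> (int \<Rightarrow> complex) \<times> (int \<Rightarrow> complex)" where
  "pdiff x y = ((\<lambda>n. fst x n - fst y n), (\<lambda>n. snd x n - snd y n))"

definition dist_to :: "(int \<Rightarrow> complex) \<times> (int \<Rightarrow> complex)
     \<Rightarrow> ((int \<Rightarrow> complex) \<times> (int \<Rightarrow> complex)) set \<Rightarrow> real" where
  "dist_to x N = Inf {pnorm (pdiff x y) | y. y \<in> N}"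

text \<open>Kato's delta(M,N) (with delta(0,N) = 0) and the gap delta-hat.\<close>
definition gap_dir :: "((int \<Rightarrow> complex) \<times> (int \<Rightarrow> complex)) set
     \<Rightarrow> ((int \<Rightarrow> complex) \<times> (int \<Rightarrow> complex)) set \<Rightarrow> real" where
  "gap_dir M N = Sup (insert 0 {dist_to x N | x. x \<in> M \<and> pnorm x = 1})"

definition gap :: "((int \<Rightarrow> complex) \<times> (int \<Rightarrow> complex)) set
     \<Rightarrow> ((int \<Rightarrow> complex) \<times> (int \<Rightarrow> complex)) set \<Rightarrow> real" where
  "gap M N = max (gap_dir M N) (gap_dir N M)"

end

theory Submission
  imports Defs
begin

lemma nonneg_sum_bound:
  fixes f :: "'a \<Rightarrow> real"
  assumes "\<And>x. f x \<ge> 0" "\<And>F. finite F \<Longrightarrow> sum f F \<le> B"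
  shows "f summable_on UNIV" "infsum f UNIV \<le> B"
proof -
  show s: "f summable_on UNIV"
    by (rule nonneg_bdd_above_summable_on) (use assms in \<open>auto intro!: bdd_aboveI2\<close>)
  show "infsum f UNIV \<le> B"
    by (rule infsum_le_finite_sums[OF s]) (use assms in auto)
qed

lemma has_sum_diff':
  fixes f g :: "'a \<Rightarrow> 'b::topological_ab_group_add"
  assumes "(f has_sum a) A" "(g has_sum b) A"
  shows "((\<lambda>x. f x - g x) has_sum (a - b)) A"
  using has_sum_add[OF assms(1) has_sum_uminus[THEN iffD2, of g A "- b", simplified, OF assms(2)]] by simp

lemma infsum_diff':
  fixes f g :: "'a \<Rightarrow> 'b::{topological_ab_group_add,t2_space}"
  assumes "f summable_on A" "g summable_on A"
  shows "infsum (\<lambda>x. f x - g x) A = infsum f A - infsum g A"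
  using has_sum_diff'[OF has_sum_infsum[OF assms(1)] has_sum_infsum[OF assms(2)]]
  by (simp add: infsumI)

lemma summable_on_diff':
  fixes f g :: "'a \<Rightarrow> 'b::real_normed_vector"
  assumes "f summable_on A" "g summable_on A"
  shows "(\<lambda>x. f x - g x) summable_on A"
  using has_sum_diff'[OF has_sum_infsum[OF assms(1)] has_sum_infsum[OF assms(2)]]
  by (auto simp: summable_on_def)

lemma has_sum_sum':
  fixes f :: "'i \<Rightarrow> 'a \<Rightarrow> 'b::topological_comm_monoid_add"
  assumes "finite I" "\<And>i. i \<in> I \<Longrightarrow> ((f i) has_sum (s i)) A"
  shows "((\<lambda>x. \<Sum>i\<in>I. f i x) has_sum (\<Sum>i\<in>I. s i)) A"
  using assms by (induction I rule: finite_induct) (auto intro!: has_sum_add)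

lemma infsum_sum':
  fixes f :: "'i \<Rightarrow> 'a \<Rightarrow> 'b::real_normed_vector"
  assumes "finite I" "\<And>i. i \<in> I \<Longrightarrow> f i summable_on A"
  shows "infsum (\<lambda>x. \<Sum>i\<in>I. f i x) A = (\<Sum>i\<in>I. infsum (f i) A)"
  using has_sum_sum'[OF assms(1), where f=f and s="\<lambda>i. infsum (f i) A" and A=A] assms(2)
  by (simp add: infsumI)

lemma summable_on_sum':
  fixes f :: "'i \<Rightarrow> 'a \<Rightarrow> 'b::real_normed_vector"
  assumes "finite I" "\<And>i. i \<in> I \<Longrightarrow> f i summable_on A"
  shows "(\<lambda>x. \<Sum>i\<in>I. f i x) summable_on A"
  using has_sum_sum'[OF assms(1), where f=f and s="\<lambda>i. infsum (f i) A" and A=A] assms(2)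
  by (auto simp: summable_on_def)

lemma cs_infsum:
  fixes a b :: "'a \<Rightarrow> real"
  assumes "\<And>x. a x \<ge> 0" "\<And>x. b x \<ge> 0"
    and "(\<lambda>x. (a x)\<^sup>2) summable_on UNIV" "(\<lambda>x. (b x)\<^sup>2) summable_on UNIV"
  shows "(\<lambda>x. a x * b x) summable_on UNIV"
    "infsum (\<lambda>x. a x * b x) UNIV \<le> sqrt (infsum (\<lambda>x. (a x)\<^sup>2) UNIV) * sqrt (infsum (\<lambda>x. (b x)\<^sup>2) UNIV)"
proof -
  have fin: "sum (\<lambda>x. a x * b x) F \<le> sqrt (infsum (\<lambda>x. (a x)\<^sup>2) UNIV) * sqrt (infsum (\<lambda>x. (b x)\<^sup>2) UNIV)"
    if "finite F" for F
  proof -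
    have "sum (\<lambda>x. a x * b x) F \<le> L2_set a F * L2_set b F"
      using L2_set_mult_ineq[of a b F] assms(1,2) by simp
    also have "\<dots> \<le> sqrt (infsum (\<lambda>x. (a x)\<^sup>2) UNIV) * sqrt (infsum (\<lambda>x. (b x)\<^sup>2) UNIV)"
      unfolding L2_set_def
      by (intro mult_mono real_sqrt_le_mono finite_sum_le_infsum assms that) 
         (auto intro!: sum_nonneg infsum_nonneg)
    finally show ?thesis .
  qed
  show "(\<lambda>x. a x * b x) summable_on UNIV"
    "infsum (\<lambda>x. a x * b x) UNIV \<le> sqrt (infsum (\<lambda>x. (a x)\<^sup>2) UNIV) * sqrt (infsum (\<lambda>x. (b x)\<^sup>2) UNIV)"
    using nonneg_sum_bound[of "\<lambda>x. a x * b x", OF _ fin] assms by auto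
qed


definition rho :: "nat \<Rightarrow> real \<Rightarrow> int \<Rightarrow> real" where
  "rho m \<mu> n = (pi * real_of_int \<bar>n\<bar>) ^ (2 * m) + \<mu>"

lemma bracket_pos: "bracket n > 0" and bracket_ge1: "bracket n \<ge> 1"
  by (auto simp: bracket_def)

lemma rho_pos: "\<mu> > 0 \<Longrightarrow> rho m \<mu> n > 0" and rho_ge: "rho m \<mu> n \<ge> \<mu>"
  by (auto simp: rho_def intro!: add_nonneg_pos)

lemma pow_one_plus: 
  fixes x :: real assumes "x \<ge> 0"
  shows "(1 + x) ^ k \<le> 2 ^ k * (x ^ k + 1)"
proof -
  have "(1 + x) ^ k \<le> (2 * max 1 x) ^ k"
    by (rule power_mono) (use assms in auto)
  also have "\<dots> = 2 ^ k * max 1 x ^ k" by (simp add: power_mult_distrib)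
  also have "max 1 x ^ k \<le> x ^ k + 1"
  proof (cases "x \<le> 1")
    case True
    then have "max 1 x = 1" by simp
    then show ?thesis using assms by simp
  next
    case False
    then have "max 1 x = x" by simp
    then show ?thesis by simp
  qed
  finally show ?thesis by (simp add: mult_left_mono)
qed

lemma bracket_pow_le:
  fixes x :: real assumes "x \<ge> 0"
  shows "(1 + x) ^ (2*m) \<le> 4 ^ m * (x ^ (2*m) + 1)"
  using pow_one_plus[OF assms, of "2*m"] by (simp add: power_mult)

lemma pi_pow_ge: "x \<ge> 0 \<Longrightarrow> c \<ge> 1 \<Longrightarrow> (c * x) ^ k \<ge> (x::real) ^ k"
proof -
  assume a: "x \<ge> 0" "c \<ge> 1"
  have "x \<le> c * x" using a mult_right_mono[of 1 c x] by simp
  then show ?thesis using a by (intro power_mono) auto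
qed

lemma bracket_le_rho:
  assumes "\<mu> \<ge> 1"
  shows "bracket n ^ (2*m) \<le> 4 ^ m * rho m \<mu> n"
proof -
  have "bracket n ^ (2*m) \<le> 4 ^ m * (real_of_int \<bar>n\<bar> ^ (2*m) + 1)"
    unfolding bracket_def by (rule bracket_pow_le) simp
  also have "\<dots> \<le> 4 ^ m * rho m \<mu> n"
    unfolding rho_def using pi_pow_ge[of "real_of_int \<bar>n\<bar>" pi "2*m"] pi_gt3 assms
    by (intro mult_left_mono add_mono) auto
  finally show ?thesis .
qed

lemma rho_le_bracket:
  assumes "\<mu> \<ge> 0"
  shows "rho m \<mu> n \<le> (pi ^ (2*m) + \<mu>) * bracket n ^ (2*m)"
proof -
  have "(pi * real_of_int \<bar>n\<bar>) ^ (2*m) \<le> pi ^ (2*m) * bracket n ^ (2*m)"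
    unfolding power_mult_distrib bracket_def by (intro mult_left_mono power_mono) auto
  moreover have "\<mu> \<le> \<mu> * bracket n ^ (2*m)"
    using assms bracket_ge1[of n] by (simp add: mult_le_cancel_left1 one_le_power)
  moreover have "(pi ^ (2*m) + \<mu>) * bracket n ^ (2*m) = pi ^ (2*m) * bracket n ^ (2*m) + \<mu> * bracket n ^ (2*m)"
    by (simp add: distrib_right)
  ultimately show ?thesis unfolding rho_def by linarith
qed

lemma bracket_diff_le: "bracket (n - l) \<le> bracket n * bracket l"
proof -
  have "\<bar>n - l\<bar> \<le> \<bar>n\<bar> + \<bar>l\<bar>" by (rule abs_triangle_ineq4)
  then have a: "real_of_int \<bar>n - l\<bar> \<le> real_of_int \<bar>n\<bar> + real_of_int \<bar>l\<bar>" by linarith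
  have b: "0 \<le> real_of_int \<bar>n\<bar> * real_of_int \<bar>l\<bar>" by simp
  have c: "(1 + real_of_int \<bar>n\<bar>) * (1 + real_of_int \<bar>l\<bar>) = 1 + real_of_int \<bar>n\<bar> + real_of_int \<bar>l\<bar> + real_of_int \<bar>n\<bar> * real_of_int \<bar>l\<bar>"
    by algebra
  show ?thesis unfolding bracket_def c using a b by linarith
qed

lemma inv_rho_peetre:
  assumes "\<mu> \<ge> 1"
  shows "1 / rho m \<mu> l \<le> 4 ^ m * bracket n ^ (2*m) / bracket (n - l) ^ (2*m)"
proof -
  have p: "rho m \<mu> l > 0" using rho_pos assms by auto
  have "bracket (n - l) ^ (2*m) \<le> (bracket n * bracket l) ^ (2*m)"
    by (rule power_mono[OF bracket_diff_le]) (simp add: bracket_def)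
  also have "\<dots> = bracket n ^ (2*m) * bracket l ^ (2*m)" by (simp add: power_mult_distrib)
  also have "\<dots> \<le> bracket n ^ (2*m) * (4 ^ m * rho m \<mu> l)"
    by (intro mult_left_mono bracket_le_rho assms) (simp add: bracket_def)
  finally have "bracket (n - l) ^ (2*m) \<le> 4 ^ m * bracket n ^ (2*m) * rho m \<mu> l" by (simp add: mult_ac)
  then show ?thesis using p bracket_pos[of "n-l"]
    by (simp add: field_simps)
qed

lemma rho_big:
  assumes "\<mu> \<ge> 1" "\<bar>n - l\<bar> \<le> 2 * \<bar>n\<bar>"
  shows "bracket (n - l) ^ (2*m) \<le> 4 ^ m * rho m \<mu> n"
proof -
  have "bracket (n - l) ^ (2*m) \<le> 4 ^ m * (real_of_int \<bar>n - l\<bar> ^ (2*m) + 1)"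
    unfolding bracket_def by (rule bracket_pow_le) simp
  also have "real_of_int \<bar>n - l\<bar> ^ (2*m) \<le> (pi * real_of_int \<bar>n\<bar>) ^ (2*m)"
  proof (rule power_mono)
    have "real_of_int \<bar>n - l\<bar> \<le> 2 * real_of_int \<bar>n\<bar>" using assms(2) by linarith
    also have "\<dots> \<le> pi * real_of_int \<bar>n\<bar>" using pi_gt3 by (intro mult_right_mono) auto
    finally show "real_of_int \<bar>n - l\<bar> \<le> pi * real_of_int \<bar>n\<bar>" .
  qed simp
  finally have "bracket (n - l) ^ (2*m) \<le> 4 ^ m * ((pi * real_of_int \<bar>n\<bar>) ^ (2*m) + 1)"
    by (simp add: mult_left_mono)
  also have "\<dots> \<le> 4 ^ m * rho m \<mu> n" unfolding rho_def using assms(1) by (intro mult_left_mono) auto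
  finally show ?thesis .
qed

lemma hs_pointwise:
  assumes "\<mu> \<ge> 1"
  shows "1 / (rho m \<mu> n * rho m \<mu> l) \<le> 4 ^ m / bracket (n - l) ^ (2*m) * (1 / rho m \<mu> n + 1 / rho m \<mu> l)"
proof -
  have pn: "rho m \<mu> n > 0" and pl: "rho m \<mu> l > 0" using rho_pos assms by auto
  have b: "bracket (n - l) ^ (2*m) > 0" using bracket_pos by simp
  consider "\<bar>n - l\<bar> \<le> 2 * \<bar>n\<bar>" | "\<bar>n - l\<bar> \<le> 2 * \<bar>l\<bar>" by linarith
  then show ?thesis
  proof cases
    case 1
    have "bracket (n - l) ^ (2*m) \<le> 4 ^ m * rho m \<mu> n" by (rule rho_big[OF assms 1])
    then have "1 / rho m \<mu> n \<le> 4 ^ m / bracket (n - l) ^ (2*m)"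
      using pn b by (simp add: field_simps)
    then have "1 / rho m \<mu> n * (1 / rho m \<mu> l) \<le> 4 ^ m / bracket (n - l) ^ (2*m) * (1 / rho m \<mu> l)"
      using pl by (intro mult_right_mono) auto
    then have "1 / (rho m \<mu> n * rho m \<mu> l) \<le> 4 ^ m / bracket (n - l) ^ (2*m) * (1 / rho m \<mu> l)"
      by simp
    also have "\<dots> \<le> 4 ^ m / bracket (n - l) ^ (2*m) * (1 / rho m \<mu> n + 1 / rho m \<mu> l)"
      using pn b by (intro mult_left_mono) auto
    finally show ?thesis .
  next
    case 2
    then have "\<bar>l - n\<bar> \<le> 2 * \<bar>l\<bar>" by linarith
    have "bracket (l - n) ^ (2*m) \<le> 4 ^ m * rho m \<mu> l" by (rule rho_big[OF assms \<open>\<bar>l - n\<bar> \<le> 2 * \<bar>l\<bar>\<close>])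
    moreover have "bracket (l - n) = bracket (n - l)" by (simp add: bracket_def abs_minus_commute)
    ultimately have "1 / rho m \<mu> l \<le> 4 ^ m / bracket (n - l) ^ (2*m)"
      using pl b by (simp add: field_simps)
    then have "1 / rho m \<mu> l * (1 / rho m \<mu> n) \<le> 4 ^ m / bracket (n - l) ^ (2*m) * (1 / rho m \<mu> n)"
      using pn by (intro mult_right_mono) auto
    then have "1 / (rho m \<mu> n * rho m \<mu> l) \<le> 4 ^ m / bracket (n - l) ^ (2*m) * (1 / rho m \<mu> n)"
      by (simp add: mult.commute)
    also have "\<dots> \<le> 4 ^ m / bracket (n - l) ^ (2*m) * (1 / rho m \<mu> n + 1 / rho m \<mu> l)"
      using pl b by (intro mult_left_mono) auto
    finally show ?thesis .
  qed
qed


definition l2 :: "(int \<Rightarrow> complex) \<Rightarrow> bool" where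
  "l2 f \<longleftrightarrow> (\<lambda>n. (cmod (f n))\<^sup>2) summable_on UNIV"

definition wl2 :: "nat \<Rightarrow> (int \<Rightarrow> complex) \<Rightarrow> bool" where
  "wl2 m V \<longleftrightarrow> (\<lambda>n. (cmod (V n))\<^sup>2 / bracket n ^ (2*m)) summable_on UNIV"

definition wsq :: "nat \<Rightarrow> (int \<Rightarrow> complex) \<Rightarrow> real" where
  "wsq m V = (\<Sum>\<^sub>\<infinity>n. (cmod (V n))\<^sup>2 / bracket n ^ (2*m))"

definition Ssum :: "nat \<Rightarrow> real \<Rightarrow> real" where
  "Ssum m \<mu> = (\<Sum>\<^sub>\<infinity>n. 1 / rho m \<mu> n)"

definition hsrow :: "nat \<Rightarrow> real \<Rightarrow> (int \<Rightarrow> complex) \<Rightarrow> int \<Rightarrow> real" where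
  "hsrow m \<mu> V n = (\<Sum>\<^sub>\<infinity>l. (cmod (V (n - l)))\<^sup>2 / rho m \<mu> l)"

definition HSb :: "nat \<Rightarrow> real \<Rightarrow> (int \<Rightarrow> complex) \<Rightarrow> real" where
  "HSb m \<mu> V = (\<Sum>\<^sub>\<infinity>n. hsrow m \<mu> V n / rho m \<mu> n)"

definition Kop :: "nat \<Rightarrow> real \<Rightarrow> (int \<Rightarrow> complex) \<Rightarrow> (int \<Rightarrow> complex) \<Rightarrow> int \<Rightarrow> complex" where
  "Kop m \<mu> V h = (\<lambda>n. (\<Sum>\<^sub>\<infinity>l. V (n - l) * h l / of_real (sqrt (rho m \<mu> l))) / of_real (sqrt (rho m \<mu> n)))"

lemma bij_minus: "bij_betw (\<lambda>l::int. n - l) UNIV UNIV"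
  by (rule bij_betw_byWitness[where f'="\<lambda>l. n - l"]) auto

lemma summable_reflect: "(\<lambda>l. g ((n::int) - l)) summable_on UNIV \<longleftrightarrow> g summable_on UNIV"
  using summable_on_reindex_bij_betw[OF bij_minus[of n], of g] .

lemma infsum_reflect: "(\<Sum>\<^sub>\<infinity>l. g ((n::int) - l)) = infsum g UNIV"
  using infsum_reindex_bij_betw[OF bij_minus[of n], of g] .

lemma bij_shift: "bij_betw (\<lambda>l::int. l - k) UNIV UNIV"
  by (rule bij_betw_byWitness[where f'="\<lambda>l. l + k"]) auto

lemma l2sq_nonneg: "l2sq f \<ge> 0"
  unfolding l2sq_def by (rule infsum_nonneg) simp

lemma wsq_nonneg: "wsq m f \<ge> 0"
  unfolding wsq_def by (intro infsum_nonneg divide_nonneg_pos) (auto simp: bracket_pos)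

lemma sq_add_le: "(cmod (a + b))\<^sup>2 \<le> 2 * (cmod a)\<^sup>2 + 2 * (cmod b)\<^sup>2"
proof -
  have "cmod (a + b) \<le> cmod a + cmod b" by (rule norm_triangle_ineq)
  then have "(cmod (a + b))\<^sup>2 \<le> (cmod a + cmod b)\<^sup>2" by (intro power_mono) auto
  also have "\<dots> \<le> 2 * (cmod a)\<^sup>2 + 2 * (cmod b)\<^sup>2"
    using sum_squares_bound[of "cmod a" "cmod b"] by (simp add: power2_eq_square algebra_simps)
  finally show ?thesis .
qed

lemma l2_add: assumes "l2 f" "l2 g"
  shows "l2 (\<lambda>n. f n + g n)" "l2sq (\<lambda>n. f n + g n) \<le> 2 * l2sq f + 2 * l2sq g"
proof -
  have s: "(\<lambda>n. 2 * (cmod (f n))\<^sup>2 + 2 * (cmod (g n))\<^sup>2) summable_on UNIV"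
    using assms unfolding l2_def by (intro summable_on_add summable_on_cmult_right) auto
  show "l2 (\<lambda>n. f n + g n)" unfolding l2_def
    by (rule summable_on_comparison_test[OF s]) (auto simp: sq_add_le)
  then have sfg: "(\<lambda>n. (cmod (f n + g n))\<^sup>2) summable_on UNIV" unfolding l2_def .
  have "l2sq (\<lambda>n. f n + g n) \<le> (\<Sum>\<^sub>\<infinity>n. 2 * (cmod (f n))\<^sup>2 + 2 * (cmod (g n))\<^sup>2)"
    unfolding l2sq_def by (rule infsum_mono[OF sfg s]) (simp add: sq_add_le)
  also have "\<dots> = 2 * l2sq f + 2 * l2sq g"
    unfolding l2sq_def using assms unfolding l2_def
    by (simp add: infsum_add summable_on_cmult_right infsum_cmult_right')
  finally show "l2sq (\<lambda>n. f n + g n) \<le> 2 * l2sq f + 2 * l2sq g" .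
qed

lemma l2_uminus: "l2 f \<Longrightarrow> l2 (\<lambda>n. - f n)" and l2sq_uminus: "l2sq (\<lambda>n. - f n) = l2sq f"
  by (simp_all add: l2_def l2sq_def)

lemma l2_diff: assumes "l2 f" "l2 g"
  shows "l2 (\<lambda>n. f n - g n)" "l2sq (\<lambda>n. f n - g n) \<le> 2 * l2sq f + 2 * l2sq g"
  using l2_add[OF assms(1) l2_uminus[OF assms(2)]] by (simp_all add: l2sq_uminus)

lemma l2_cmult: "l2 f \<Longrightarrow> l2 (\<lambda>n. c * f n)" and l2sq_cmult: "l2sq (\<lambda>n. c * f n) = (cmod c)\<^sup>2 * l2sq f"
  by (auto simp: l2_def l2sq_def norm_mult power_mult_distrib intro: summable_on_cmult_right infsum_cmult_right')

lemma l2_sum: "finite J \<Longrightarrow> (\<And>j. j \<in> J \<Longrightarrow> l2 (d j)) \<Longrightarrow> l2 (\<lambda>n. \<Sum>j\<in>J. d j n)"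
proof (induction J rule: finite_induct)
  case empty then show ?case by (simp add: l2_def)
next
  case (insert x F) then show ?case using l2_add[of "d x" "\<lambda>n. \<Sum>j\<in>F. d j n"] by simp
qed

lemma l2_coord_le: "l2 f \<Longrightarrow> (cmod (f n))\<^sup>2 \<le> l2sq f"
  unfolding l2sq_def l2_def using finite_sum_le_infsum[of "\<lambda>n. (cmod (f n))\<^sup>2" UNIV "{n}"] by simp


lemma rho_ge1: "\<mu> \<ge> 1 \<Longrightarrow> rho m \<mu> n \<ge> 1"
  using rho_ge[of \<mu> m n] by linarith

lemma rho_pos1: "\<mu> \<ge> 1 \<Longrightarrow> rho m \<mu> n > 0"
  using rho_ge1[of \<mu> m n] by linarith

lemma hsrow_summ:
  assumes "\<mu> \<ge> 1" "wl2 m V"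
  shows "(\<lambda>l. (cmod (V (n - l)))\<^sup>2 / rho m \<mu> l) summable_on UNIV"
    "hsrow m \<mu> V n \<le> 4 ^ m * bracket n ^ (2*m) * wsq m V"
proof -
  define w where "w k = (cmod (V k))\<^sup>2 / bracket k ^ (2*m)" for k
  define c where "c = 4 ^ m * bracket n ^ (2*m)"
  have sw: "w summable_on UNIV" using assms(2) unfolding wl2_def w_def .
  have s1: "(\<lambda>l. c * w (n - l)) summable_on UNIV"
    by (rule summable_on_cmult_right) (use summable_reflect[of w n] sw in simp)
  have le: "(cmod (V (n - l)))\<^sup>2 / rho m \<mu> l \<le> c * w (n - l)" for l
  proof -
    have "(cmod (V (n - l)))\<^sup>2 / rho m \<mu> l = (cmod (V (n - l)))\<^sup>2 * (1 / rho m \<mu> l)" by simp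
    also have "\<dots> \<le> (cmod (V (n - l)))\<^sup>2 * (4 ^ m * bracket n ^ (2*m) / bracket (n - l) ^ (2*m))"
      by (intro mult_left_mono inv_rho_peetre assms) simp
    also have "\<dots> = c * w (n - l)" unfolding c_def w_def by simp
    finally show ?thesis .
  qed
  have nn: "0 \<le> (cmod (V (n - l)))\<^sup>2 / rho m \<mu> l" for l
    using rho_pos1[OF assms(1)] by (intro divide_nonneg_pos) auto
  show s2: "(\<lambda>l. (cmod (V (n - l)))\<^sup>2 / rho m \<mu> l) summable_on UNIV"
    by (rule summable_on_comparison_test[OF s1]) (use le nn in auto)
  have "hsrow m \<mu> V n \<le> (\<Sum>\<^sub>\<infinity>l. c * w (n - l))"
    unfolding hsrow_def by (rule infsum_mono[OF s2 s1]) (rule le)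
  also have "\<dots> = c * wsq m V"
  proof -
    have "(\<Sum>\<^sub>\<infinity>l. c * w (n - l)) = c * (\<Sum>\<^sub>\<infinity>l. w (n - l))" by (rule infsum_cmult_right')
    also have "(\<Sum>\<^sub>\<infinity>l. w (n - l)) = wsq m V" by (subst infsum_reflect[of w n]) (simp add: wsq_def w_def[abs_def])
    finally show ?thesis .
  qed
  finally show "hsrow m \<mu> V n \<le> 4 ^ m * bracket n ^ (2*m) * wsq m V" unfolding c_def .
qed

lemma hsrow_nonneg: "\<mu> \<ge> 1 \<Longrightarrow> hsrow m \<mu> V n \<ge> 0"
  unfolding hsrow_def using rho_pos1 by (intro infsum_nonneg divide_nonneg_pos) auto

lemma HSb_bound:
  assumes mu: "\<mu> \<ge> 1" and V: "wl2 m V" and S: "(\<lambda>n. 1 / rho m \<mu> n) summable_on UNIV"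
  shows "(\<lambda>n. hsrow m \<mu> V n / rho m \<mu> n) summable_on UNIV"
    "HSb m \<mu> V \<le> 2 * 4 ^ m * wsq m V * Ssum m \<mu>"
proof -
  define w where "w k = (cmod (V k))\<^sup>2 / bracket k ^ (2*m)" for k
  have sw: "w summable_on UNIV" using V unfolding wl2_def w_def[abs_def] .
  have wnn: "w k \<ge> 0" for k unfolding w_def using bracket_pos by simp
  have rp: "rho m \<mu> n > 0" for n using rho_pos1[OF mu] .
  have Snn: "Ssum m \<mu> \<ge> 0" unfolding Ssum_def using rp by (intro infsum_nonneg) (simp add: less_imp_le)
  have wsq_eq: "wsq m V = infsum w UNIV" unfolding wsq_def w_def[abs_def] ..
  define g where "g n = (\<Sum>\<^sub>\<infinity>k. w k / rho m \<mu> (n - k))" for n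
  have sg: "(\<lambda>k. w k / rho m \<mu> (n - k)) summable_on UNIV" for n
  proof (rule summable_on_comparison_test[OF sw])
    fix k
    have "w k \<le> w k * rho m \<mu> (n - k)" using mult_left_mono[OF rho_ge1[OF mu, of m "n - k"] wnn[of k]] by simp
    then show "w k / rho m \<mu> (n - k) \<le> w k" using rp[of "n - k"] by (simp add: divide_le_eq)
    show "0 \<le> w k / rho m \<mu> (n - k)" using rp[of "n - k"] wnn[of k] by simp
  qed
  have row: "hsrow m \<mu> V n / rho m \<mu> n \<le> 4 ^ m * wsq m V * (1 / rho m \<mu> n) + 4 ^ m * g n" for n
  proof -
    have s0: "(\<lambda>l. (cmod (V (n - l)))\<^sup>2 / rho m \<mu> l / rho m \<mu> n) summable_on UNIV"
      using summable_on_cmult_left[OF hsrow_summ(1)[OF mu V, of n], of "1 / rho m \<mu> n"] by simp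
    have sa: "(\<lambda>l. 4 ^ m * w (n - l) / rho m \<mu> n) summable_on UNIV"
      using summable_on_cmult_left[OF summable_on_cmult_right[OF summable_reflect[of w n, THEN iffD2, OF sw]], 
          of "4 ^ m" "1 / rho m \<mu> n"] by simp
    have sb0: "(\<lambda>l. w l / rho m \<mu> (n - l)) summable_on UNIV" by (rule sg)
    have sb: "(\<lambda>l. 4 ^ m * w (n - l) / rho m \<mu> l) summable_on UNIV"
      using summable_on_cmult_right[OF summable_reflect[of "\<lambda>l. w l / rho m \<mu> (n - l)" n, THEN iffD2, OF sb0], 
          of "4 ^ m"] by simp
    have "hsrow m \<mu> V n / rho m \<mu> n = (\<Sum>\<^sub>\<infinity>l. (cmod (V (n - l)))\<^sup>2 / rho m \<mu> l / rho m \<mu> n)"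
      unfolding hsrow_def by (simp add: infsum_cmult_left' divide_inverse)
    also have "\<dots> \<le> (\<Sum>\<^sub>\<infinity>l. 4 ^ m * w (n - l) / rho m \<mu> n + 4 ^ m * w (n - l) / rho m \<mu> l)"
    proof (rule infsum_mono[OF s0 summable_on_add[OF sa sb]])
      fix l
      have "(cmod (V (n - l)))\<^sup>2 / rho m \<mu> l / rho m \<mu> n = (cmod (V (n - l)))\<^sup>2 * (1 / (rho m \<mu> n * rho m \<mu> l))"
        by simp
      also have "\<dots> \<le> (cmod (V (n - l)))\<^sup>2 * (4 ^ m / bracket (n - l) ^ (2*m) * (1 / rho m \<mu> n + 1 / rho m \<mu> l))"
        by (intro mult_left_mono hs_pointwise mu) simp
      also have "\<dots> = 4 ^ m * w (n - l) / rho m \<mu> n + 4 ^ m * w (n - l) / rho m \<mu> l"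
        unfolding w_def using rp[of n] rp[of l] bracket_pos[of "n-l"] by (simp add: field_simps)
      finally show "(cmod (V (n - l)))\<^sup>2 / rho m \<mu> l / rho m \<mu> n \<le> 4 ^ m * w (n - l) / rho m \<mu> n + 4 ^ m * w (n - l) / rho m \<mu> l" .
    qed
    also have "\<dots> = (\<Sum>\<^sub>\<infinity>l. 4 ^ m * w (n - l) / rho m \<mu> n) + (\<Sum>\<^sub>\<infinity>l. 4 ^ m * w (n - l) / rho m \<mu> l)"
      by (rule infsum_add[OF sa sb])
    also have "(\<Sum>\<^sub>\<infinity>l. 4 ^ m * w (n - l) / rho m \<mu> n) = 4 ^ m * wsq m V * (1 / rho m \<mu> n)"
    proof -
      have "(\<Sum>\<^sub>\<infinity>l. 4 ^ m * w (n - l) / rho m \<mu> n) = (\<Sum>\<^sub>\<infinity>l. (4 ^ m / rho m \<mu> n) * w (n - l))"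
        by (simp add: field_simps)
      also have "\<dots> = (4 ^ m / rho m \<mu> n) * (\<Sum>\<^sub>\<infinity>l. w (n - l))" by (rule infsum_cmult_right')
      also have "(\<Sum>\<^sub>\<infinity>l. w (n - l)) = wsq m V" by (subst infsum_reflect[of w n]) (simp add: wsq_eq)
      finally show ?thesis by simp
    qed
    also have "(\<Sum>\<^sub>\<infinity>l. 4 ^ m * w (n - l) / rho m \<mu> l) = 4 ^ m * g n"
    proof -
      have "(\<Sum>\<^sub>\<infinity>l. 4 ^ m * w (n - l) / rho m \<mu> l) = (\<Sum>\<^sub>\<infinity>l. 4 ^ m * (w (n - l) / rho m \<mu> (n - (n - l))))"
        by simp
      also have "\<dots> = 4 ^ m * (\<Sum>\<^sub>\<infinity>l. w (n - l) / rho m \<mu> (n - (n - l)))" by (rule infsum_cmult_right')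
      also have "(\<Sum>\<^sub>\<infinity>l. w (n - l) / rho m \<mu> (n - (n - l))) = g n"
        unfolding g_def by (rule infsum_reflect[of "\<lambda>k. w k / rho m \<mu> (n - k)" n])
      finally show ?thesis .
    qed
    finally show ?thesis .
  qed
  have gsum: "sum g F \<le> wsq m V * Ssum m \<mu>" if "finite F" for F
  proof -
    have "sum g F = (\<Sum>\<^sub>\<infinity>k. \<Sum>n\<in>F. w k / rho m \<mu> (n - k))"
      unfolding g_def by (rule infsum_sum'[symmetric]) (use that sg in auto)
    also have "\<dots> \<le> (\<Sum>\<^sub>\<infinity>k. w k * Ssum m \<mu>)"
    proof (rule infsum_mono)
      show "(\<lambda>k. \<Sum>n\<in>F. w k / rho m \<mu> (n - k)) summable_on UNIV"
        by (rule summable_on_sum') (use that sg in auto)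
      show "(\<lambda>k. w k * Ssum m \<mu>) summable_on UNIV" by (rule summable_on_cmult_left[OF sw])
      fix k
      have "(\<Sum>n\<in>F. w k / rho m \<mu> (n - k)) = w k * (\<Sum>n\<in>F. 1 / rho m \<mu> (n - k))"
        by (simp add: sum_distrib_left)
      also have "(\<Sum>n\<in>F. 1 / rho m \<mu> (n - k)) = (\<Sum>j\<in>(\<lambda>n. n - k) ` F. 1 / rho m \<mu> j)"
        by (subst sum.reindex) (auto simp: inj_on_def)
      also have "\<dots> \<le> Ssum m \<mu>"
        unfolding Ssum_def by (rule finite_sum_le_infsum[OF S]) (use that rp in \<open>auto simp: less_imp_le\<close>)
      finally show "(\<Sum>n\<in>F. w k / rho m \<mu> (n - k)) \<le> w k * Ssum m \<mu>"
        by (simp add: mult_left_mono wnn)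
    qed
    also have "\<dots> = wsq m V * Ssum m \<mu>" by (simp add: infsum_cmult_left' wsq_eq)
    finally show ?thesis .
  qed
  have fin: "(\<Sum>n\<in>F. hsrow m \<mu> V n / rho m \<mu> n) \<le> 2 * 4 ^ m * wsq m V * Ssum m \<mu>" if "finite F" for F
  proof -
    have "(\<Sum>n\<in>F. hsrow m \<mu> V n / rho m \<mu> n) \<le> (\<Sum>n\<in>F. 4 ^ m * wsq m V * (1 / rho m \<mu> n) + 4 ^ m * g n)"
      by (rule sum_mono) (rule row)
    also have "\<dots> = 4 ^ m * wsq m V * (\<Sum>n\<in>F. 1 / rho m \<mu> n) + 4 ^ m * sum g F"
      by (simp add: sum.distrib sum_distrib_left)
    also have "\<dots> \<le> 4 ^ m * wsq m V * Ssum m \<mu> + 4 ^ m * (wsq m V * Ssum m \<mu>)"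
    proof (intro add_mono mult_left_mono gsum that)
      show "(\<Sum>n\<in>F. 1 / rho m \<mu> n) \<le> Ssum m \<mu>"
        unfolding Ssum_def by (rule finite_sum_le_infsum[OF S that]) (use rp in \<open>auto simp: less_imp_le\<close>)
    qed (use wsq_nonneg in auto)
    finally show ?thesis by (simp add: mult_ac)
  qed
  have nn: "hsrow m \<mu> V n / rho m \<mu> n \<ge> 0" for n
    using hsrow_nonneg[OF mu] rp by (simp add: less_imp_le)
  show "(\<lambda>n. hsrow m \<mu> V n / rho m \<mu> n) summable_on UNIV"
    "HSb m \<mu> V \<le> 2 * 4 ^ m * wsq m V * Ssum m \<mu>"
    using nonneg_sum_bound[of "\<lambda>n. hsrow m \<mu> V n / rho m \<mu> n", OF nn fin] unfolding HSb_def by auto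
qed

lemma K_pointwise:
  assumes mu: "\<mu> \<ge> 1" and V: "wl2 m V" and h: "l2 h"
  shows "(\<lambda>l. V (n - l) * h l / of_real (sqrt (rho m \<mu> l))) summable_on UNIV"
    "(cmod (Kop m \<mu> V h n))\<^sup>2 \<le> hsrow m \<mu> V n / rho m \<mu> n * l2sq h"
proof -
  have rp: "rho m \<mu> l > 0" for l using rho_pos1[OF mu] .
  define a where "a l = cmod (V (n - l)) / sqrt (rho m \<mu> l)" for l
  define b where "b l = cmod (h l)" for l
  have a2: "(a l)\<^sup>2 = (cmod (V (n - l)))\<^sup>2 / rho m \<mu> l" for l
    unfolding a_def using rp[of l] by (simp add: power_divide)
  have sa: "(\<lambda>l. (a l)\<^sup>2) summable_on UNIV" unfolding a2 by (rule hsrow_summ(1)[OF mu V])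
  have sb: "(\<lambda>l. (b l)\<^sup>2) summable_on UNIV" using h unfolding l2_def b_def .
  have ann: "a l \<ge> 0" "b l \<ge> 0" for l unfolding a_def b_def using rp[of l] by auto
  note cs = cs_infsum[of a b, OF ann sa sb]
  have nt: "norm (V (n - l) * h l / of_real (sqrt (rho m \<mu> l))) = a l * b l" for l
    unfolding a_def b_def using rp[of l] by (simp add: norm_mult norm_divide)
  have abs: "(\<lambda>l. norm (V (n - l) * h l / of_real (sqrt (rho m \<mu> l)))) summable_on UNIV"
    unfolding nt using cs(1) .
  then show "(\<lambda>l. V (n - l) * h l / of_real (sqrt (rho m \<mu> l))) summable_on UNIV"
    using summable_on_iff_abs_summable_on_complex by blast
  have "cmod (\<Sum>\<^sub>\<infinity>l. V (n - l) * h l / of_real (sqrt (rho m \<mu> l))) \<le> (\<Sum>\<^sub>\<infinity>l. a l * b l)"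
    using norm_infsum_bound[OF abs] unfolding nt .
  also have "\<dots> \<le> sqrt (hsrow m \<mu> V n) * sqrt (l2sq h)"
    using cs(2) unfolding a2 b_def[abs_def] hsrow_def l2sq_def .
  finally have le: "cmod (\<Sum>\<^sub>\<infinity>l. V (n - l) * h l / of_real (sqrt (rho m \<mu> l))) \<le> sqrt (hsrow m \<mu> V n) * sqrt (l2sq h)" .
  have "(cmod (Kop m \<mu> V h n))\<^sup>2 = (cmod (\<Sum>\<^sub>\<infinity>l. V (n - l) * h l / of_real (sqrt (rho m \<mu> l))))\<^sup>2 / rho m \<mu> n"
    unfolding Kop_def using rp[of n] by (simp add: norm_divide power_divide)
  also have "\<dots> \<le> (sqrt (hsrow m \<mu> V n) * sqrt (l2sq h))\<^sup>2 / rho m \<mu> n"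
    using rp[of n] le by (intro divide_right_mono power_mono) auto
  also have "\<dots> = hsrow m \<mu> V n / rho m \<mu> n * l2sq h"
    using hsrow_nonneg[OF mu, of m V n] l2sq_nonneg[of h] by (simp add: power_mult_distrib)
  finally show "(cmod (Kop m \<mu> V h n))\<^sup>2 \<le> hsrow m \<mu> V n / rho m \<mu> n * l2sq h" .
qed

lemma K_l2:
  assumes mu: "\<mu> \<ge> 1" and V: "wl2 m V" and S: "(\<lambda>n. 1 / rho m \<mu> n) summable_on UNIV" and h: "l2 h"
  shows "l2 (Kop m \<mu> V h)" "l2sq (Kop m \<mu> V h) \<le> HSb m \<mu> V * l2sq h"
proof -
  have s: "(\<lambda>n. hsrow m \<mu> V n / rho m \<mu> n * l2sq h) summable_on UNIV"
    by (rule summable_on_cmult_left[OF HSb_bound(1)[OF mu V S]])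
  show l: "l2 (Kop m \<mu> V h)" unfolding l2_def
  proof (rule summable_on_comparison_test[OF s])
    fix n show "(cmod (Kop m \<mu> V h n))\<^sup>2 \<le> hsrow m \<mu> V n / rho m \<mu> n * l2sq h"
      by (rule K_pointwise(2)[OF mu V h])
  qed auto
  have "l2sq (Kop m \<mu> V h) \<le> (\<Sum>\<^sub>\<infinity>n. hsrow m \<mu> V n / rho m \<mu> n * l2sq h)"
    unfolding l2sq_def[of "Kop m \<mu> V h"] by (rule infsum_mono[OF l[unfolded l2_def] s]) (rule K_pointwise(2)[OF mu V h])
  also have "\<dots> = HSb m \<mu> V * l2sq h" unfolding HSb_def by (rule infsum_cmult_left')
  finally show "l2sq (Kop m \<mu> V h) \<le> HSb m \<mu> V * l2sq h" .
qed


lemma K_diff_h: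
  assumes mu: "\<mu> \<ge> 1" and V: "wl2 m V" and h1: "l2 h1" and h2: "l2 h2"
  shows "Kop m \<mu> V (\<lambda>n. h1 n - h2 n) n = Kop m \<mu> V h1 n - Kop m \<mu> V h2 n"
proof -
  have "(\<Sum>\<^sub>\<infinity>l. V (n - l) * (h1 l - h2 l) / of_real (sqrt (rho m \<mu> l)))
      = (\<Sum>\<^sub>\<infinity>l. V (n - l) * h1 l / of_real (sqrt (rho m \<mu> l)) - V (n - l) * h2 l / of_real (sqrt (rho m \<mu> l)))"
    by (simp add: right_diff_distrib diff_divide_distrib)
  also have "\<dots> = (\<Sum>\<^sub>\<infinity>l. V (n - l) * h1 l / of_real (sqrt (rho m \<mu> l))) - (\<Sum>\<^sub>\<infinity>l. V (n - l) * h2 l / of_real (sqrt (rho m \<mu> l)))"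
    by (rule infsum_diff'[OF K_pointwise(1)[OF mu V h1] K_pointwise(1)[OF mu V h2]])
  finally show ?thesis unfolding Kop_def by (simp add: diff_divide_distrib)
qed

lemma K_add_h:
  assumes mu: "\<mu> \<ge> 1" and V: "wl2 m V" and h1: "l2 h1" and h2: "l2 h2"
  shows "Kop m \<mu> V (\<lambda>n. h1 n + h2 n) n = Kop m \<mu> V h1 n + Kop m \<mu> V h2 n"
proof -
  have "(\<Sum>\<^sub>\<infinity>l. V (n - l) * (h1 l + h2 l) / of_real (sqrt (rho m \<mu> l)))
      = (\<Sum>\<^sub>\<infinity>l. V (n - l) * h1 l / of_real (sqrt (rho m \<mu> l)) + V (n - l) * h2 l / of_real (sqrt (rho m \<mu> l)))"
    by (simp add: distrib_left add_divide_distrib)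
  also have "\<dots> = (\<Sum>\<^sub>\<infinity>l. V (n - l) * h1 l / of_real (sqrt (rho m \<mu> l))) + (\<Sum>\<^sub>\<infinity>l. V (n - l) * h2 l / of_real (sqrt (rho m \<mu> l)))"
    by (rule infsum_add[OF K_pointwise(1)[OF mu V h1] K_pointwise(1)[OF mu V h2]])
  finally show ?thesis unfolding Kop_def by (simp add: add_divide_distrib)
qed

lemma K_cmult_h: "Kop m \<mu> V (\<lambda>n. c * h n) n = c * Kop m \<mu> V h n"
proof -
  have "(\<Sum>\<^sub>\<infinity>l. V (n - l) * (c * h l) / of_real (sqrt (rho m \<mu> l)))
      = (\<Sum>\<^sub>\<infinity>l. c * (V (n - l) * h l / of_real (sqrt (rho m \<mu> l))))"
    by (simp add: mult_ac)
  also have "\<dots> = c * (\<Sum>\<^sub>\<infinity>l. V (n - l) * h l / of_real (sqrt (rho m \<mu> l)))"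
    by (rule infsum_cmult_right')
  finally show ?thesis unfolding Kop_def by simp
qed

lemma K_sum_h:
  assumes mu: "\<mu> \<ge> 1" and V: "wl2 m V" and J: "finite J" and d: "\<And>j. j \<in> J \<Longrightarrow> l2 (d j)"
  shows "Kop m \<mu> V (\<lambda>n. \<Sum>j\<in>J. d j n) n = (\<Sum>j\<in>J. Kop m \<mu> V (d j) n)"
  using J d
proof (induction J rule: finite_induct)
  case empty
  have "Kop m \<mu> V (\<lambda>n. 0 * (0::complex)) n = 0 * Kop m \<mu> V (\<lambda>n. 0) n" by (rule K_cmult_h)
  then show ?case by simp
next
  case (insert x F)
  have "Kop m \<mu> V (\<lambda>n. \<Sum>j\<in>insert x F. d j n) n = Kop m \<mu> V (\<lambda>n. d x n + (\<Sum>j\<in>F. d j n)) n"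
    using insert by simp
  also have "\<dots> = Kop m \<mu> V (d x) n + Kop m \<mu> V (\<lambda>n. \<Sum>j\<in>F. d j n) n"
    by (rule K_add_h[OF mu V]) (use insert l2_sum[of F d] in auto)
  finally show ?case using insert by simp
qed

lemma wl2_diff:
  assumes "wl2 m V1" "wl2 m V2"
  shows "wl2 m (\<lambda>k. V1 k - V2 k)"
proof -
  have s: "(\<lambda>n. 2 * ((cmod (V1 n))\<^sup>2 / bracket n ^ (2*m)) + 2 * ((cmod (V2 n))\<^sup>2 / bracket n ^ (2*m))) summable_on UNIV"
    using assms unfolding wl2_def by (intro summable_on_add summable_on_cmult_right) auto
  show ?thesis unfolding wl2_def
  proof (rule summable_on_comparison_test[OF s])
    fix n
    have "(cmod (V1 n - V2 n))\<^sup>2 \<le> 2 * (cmod (V1 n))\<^sup>2 + 2 * (cmod (- V2 n))\<^sup>2"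
      using sq_add_le[of "V1 n" "- V2 n"] by simp
    then show "(cmod (V1 n - V2 n))\<^sup>2 / bracket n ^ (2*m) \<le> 2 * ((cmod (V1 n))\<^sup>2 / bracket n ^ (2*m)) + 2 * ((cmod (V2 n))\<^sup>2 / bracket n ^ (2*m))"
    proof -
      have b: "bracket n ^ (2*m) > 0" using bracket_pos[of n] by simp
      have "(cmod (V1 n - V2 n))\<^sup>2 / bracket n ^ (2*m) \<le> (2 * (cmod (V1 n))\<^sup>2 + 2 * (cmod (V2 n))\<^sup>2) / bracket n ^ (2*m)"
        using \<open>(cmod (V1 n - V2 n))\<^sup>2 \<le> 2 * (cmod (V1 n))\<^sup>2 + 2 * (cmod (- V2 n))\<^sup>2\<close> b
        by (intro divide_right_mono) auto
      also have "\<dots> = 2 * ((cmod (V1 n))\<^sup>2 / bracket n ^ (2*m)) + 2 * ((cmod (V2 n))\<^sup>2 / bracket n ^ (2*m))"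
        by (simp add: add_divide_distrib)
      finally show ?thesis .
    qed
  qed (simp add: bracket_pos)
qed

lemma K_diff_V:
  assumes mu: "\<mu> \<ge> 1" and V1: "wl2 m V1" and V2: "wl2 m V2" and h: "l2 h"
  shows "Kop m \<mu> (\<lambda>k. V1 k - V2 k) h n = Kop m \<mu> V1 h n - Kop m \<mu> V2 h n"
proof -
  have "(\<Sum>\<^sub>\<infinity>l. (V1 (n - l) - V2 (n - l)) * h l / of_real (sqrt (rho m \<mu> l)))
      = (\<Sum>\<^sub>\<infinity>l. V1 (n - l) * h l / of_real (sqrt (rho m \<mu> l)) - V2 (n - l) * h l / of_real (sqrt (rho m \<mu> l)))"
    by (simp add: left_diff_distrib diff_divide_distrib)
  also have "\<dots> = (\<Sum>\<^sub>\<infinity>l. V1 (n - l) * h l / of_real (sqrt (rho m \<mu> l))) - (\<Sum>\<^sub>\<infinity>l. V2 (n - l) * h l / of_real (sqrt (rho m \<mu> l)))"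
    by (rule infsum_diff'[OF K_pointwise(1)[OF mu V1 h] K_pointwise(1)[OF mu V2 h]])
  finally show ?thesis unfolding Kop_def by (simp add: diff_divide_distrib)
qed

lemma apriori:
  assumes mu: "\<mu> \<ge> 1" and V: "wl2 m V" and S: "(\<lambda>n. 1 / rho m \<mu> n) summable_on UNIV"
    and HS: "HSb m \<mu> V \<le> 1/4" and h: "l2 h" and g: "l2 g" and eq: "\<And>n. h n + Kop m \<mu> V h n = g n"
  shows "l2sq h \<le> 4 * l2sq g"
proof -
  have he: "h = (\<lambda>n. g n - Kop m \<mu> V h n)" using eq by (auto simp: algebra_simps)
  have "l2sq h \<le> 2 * l2sq g + 2 * l2sq (Kop m \<mu> V h)"
    by (subst he) (rule l2_diff(2)[OF g K_l2(1)[OF mu V S h]])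
  also have "l2sq (Kop m \<mu> V h) \<le> 1/4 * l2sq h"
    using K_l2(2)[OF mu V S h] HS l2sq_nonneg[of h] by (meson mult_right_mono order_trans)
  finally show ?thesis by linarith
qed

lemma l2sq_sum_bound:
  assumes A: "finite A" and d: "\<And>j. j \<in> A \<Longrightarrow> l2 (d j)" and w: "\<And>j. j \<in> A \<Longrightarrow> w j > (0::real)"
  shows "l2sq (\<lambda>n. \<Sum>j\<in>A. d j n) \<le> (\<Sum>j\<in>A. w j) * (\<Sum>j\<in>A. l2sq (d j) / w j)"
proof -
  have pw: "(cmod (\<Sum>j\<in>A. d j n))\<^sup>2 \<le> (\<Sum>j\<in>A. w j) * (\<Sum>j\<in>A. (cmod (d j n))\<^sup>2 / w j)" for n
  proof -
    have "cmod (\<Sum>j\<in>A. d j n) \<le> (\<Sum>j\<in>A. cmod (d j n))" by (rule norm_sum)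
    also have "\<dots> = (\<Sum>j\<in>A. sqrt (w j) * (cmod (d j n) / sqrt (w j)))"
    proof (rule sum.cong)
      fix j assume "j \<in> A"
      then have "w j > 0" by (rule w)
      then show "cmod (d j n) = sqrt (w j) * (cmod (d j n) / sqrt (w j))" by simp
    qed simp
    finally have "(cmod (\<Sum>j\<in>A. d j n))\<^sup>2 \<le> (\<Sum>j\<in>A. sqrt (w j) * (cmod (d j n) / sqrt (w j)))\<^sup>2"
      by (intro power_mono) auto
    also have "\<dots> \<le> (\<Sum>j\<in>A. (sqrt (w j))\<^sup>2) * (\<Sum>j\<in>A. (cmod (d j n) / sqrt (w j))\<^sup>2)"
      by (rule Cauchy_Schwarz_ineq_sum)
    also have "\<dots> = (\<Sum>j\<in>A. w j) * (\<Sum>j\<in>A. (cmod (d j n))\<^sup>2 / w j)"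
      using w by (intro arg_cong2[where f="(*)"] sum.cong) (auto simp: power_divide less_imp_le)
    finally show ?thesis .
  qed
  have sj: "(\<lambda>n. (cmod (d j n))\<^sup>2 / w j) summable_on UNIV" if "j \<in> A" for j
    using summable_on_cmult_left[OF d[OF that, unfolded l2_def], of "1 / w j"] by simp
  have s: "(\<lambda>n. (\<Sum>j\<in>A. w j) * (\<Sum>j\<in>A. (cmod (d j n))\<^sup>2 / w j)) summable_on UNIV"
    by (intro summable_on_cmult_right summable_on_sum' A sj)
  have "l2sq (\<lambda>n. \<Sum>j\<in>A. d j n) \<le> (\<Sum>\<^sub>\<infinity>n. (\<Sum>j\<in>A. w j) * (\<Sum>j\<in>A. (cmod (d j n))\<^sup>2 / w j))"
    unfolding l2sq_def[of "\<lambda>n. \<Sum>j\<in>A. d j n"]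
    by (rule infsum_mono[OF l2_sum[OF A d, unfolded l2_def] s]) (auto intro: pw)
  also have "\<dots> = (\<Sum>j\<in>A. w j) * (\<Sum>\<^sub>\<infinity>n. \<Sum>j\<in>A. (cmod (d j n))\<^sup>2 / w j)"
    by (rule infsum_cmult_right')
  also have "(\<Sum>\<^sub>\<infinity>n. \<Sum>j\<in>A. (cmod (d j n))\<^sup>2 / w j) = (\<Sum>j\<in>A. \<Sum>\<^sub>\<infinity>n. (cmod (d j n))\<^sup>2 / w j)"
    by (rule infsum_sum'[OF A sj])
  also have "\<dots> = (\<Sum>j\<in>A. l2sq (d j) / w j)"
  proof (rule sum.cong)
    fix j
    have "(\<Sum>\<^sub>\<infinity>n. (cmod (d j n))\<^sup>2 / w j) = (\<Sum>\<^sub>\<infinity>n. (cmod (d j n))\<^sup>2 * inverse (w j))"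
      by (simp add: divide_inverse)
    also have "\<dots> = l2sq (d j) * inverse (w j)" unfolding l2sq_def by (rule infsum_cmult_left')
    finally show "(\<Sum>\<^sub>\<infinity>n. (cmod (d j n))\<^sup>2 / w j) = l2sq (d j) / w j" by (simp add: divide_inverse)
  qed simp
  finally show ?thesis .
qed

lemma l2_limit:
  assumes lim: "\<And>n. (\<lambda>K. f K n) \<longlonglongrightarrow> F n" and fl: "\<And>K. l2 (f K)" and fb: "\<And>K. l2sq (f K) \<le> B"
  shows "l2 F" "l2sq F \<le> B"
proof -
  have fin: "(\<Sum>n\<in>A. (cmod (F n))\<^sup>2) \<le> B" if "finite A" for A
  proof (rule LIMSEQ_le_const2)
    show "(\<lambda>K. \<Sum>n\<in>A. (cmod (f K n))\<^sup>2) \<longlonglongrightarrow> (\<Sum>n\<in>A. (cmod (F n))\<^sup>2)"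
      by (intro tendsto_intros lim)
    show "\<exists>N. \<forall>K\<ge>N. (\<Sum>n\<in>A. (cmod (f K n))\<^sup>2) \<le> B"
    proof (intro exI allI impI)
      fix K
      have "(\<Sum>n\<in>A. (cmod (f K n))\<^sup>2) \<le> l2sq (f K)"
        unfolding l2sq_def by (rule finite_sum_le_infsum[OF fl[unfolded l2_def] that]) auto
      then show "(\<Sum>n\<in>A. (cmod (f K n))\<^sup>2) \<le> B" using fb[of K] by linarith
    qed
  qed
  show "l2 F" "l2sq F \<le> B"
    using nonneg_sum_bound[of "\<lambda>n. (cmod (F n))\<^sup>2", OF _ fin] unfolding l2_def l2sq_def by auto
qed


lemma geom_tail:
  assumes "J \<le> K"
  shows "(\<Sum>j\<in>{J..<K}. (1/2::real) ^ j) = 2 * (1/2) ^ J - 2 * (1/2) ^ K"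
  using assms
proof (induction K rule: dec_induct)
  case base then show ?case by simp
next
  case (step n)
  have "(\<Sum>j\<in>{J..<Suc n}. (1/2::real) ^ j) = (\<Sum>j\<in>{J..<n}. (1/2::real) ^ j) + (1/2) ^ n"
    using step(1) by (rule sum.atLeastLessThan_Suc)
  also have "\<dots> = 2 * (1/2) ^ J - 2 * (1/2) ^ n + (1/2) ^ n" using step(3) by simp
  also have "(2::real) * (1/2) ^ Suc n = (1/2) ^ n" by simp
  then have "2 * (1/2) ^ J - 2 * (1/2) ^ n + (1/2) ^ n = 2 * (1/2) ^ J - 2 * (1/2::real) ^ Suc n" by linarith
  finally show ?case .
qed

lemma existence:
  assumes mu: "\<mu> \<ge> 1" and V: "wl2 m V" and S: "(\<lambda>n. 1 / rho m \<mu> n) summable_on UNIV"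
    and HS: "HSb m \<mu> V \<le> 1/4" and g: "l2 g"
    and par: "\<And>n. \<not> P n \<Longrightarrow> g n = 0"
    and Kpar: "\<And>f n. (\<And>n. \<not> P n \<Longrightarrow> f n = 0) \<Longrightarrow> \<not> P n \<Longrightarrow> Kop m \<mu> V f n = 0"
  shows "\<exists>h. l2 h \<and> (\<forall>n. h n + Kop m \<mu> V h n = g n) \<and> (\<forall>n. \<not> P n \<longrightarrow> h n = 0)"
proof -
  define L where "L = l2sq g"
  have L0: "L \<ge> 0" unfolding L_def by (rule l2sq_nonneg)
  define d where "d = rec_nat g (\<lambda>j f. (\<lambda>n. - Kop m \<mu> V f n))"
  have d0: "d 0 = g" and dS: "d (Suc j) = (\<lambda>n. - Kop m \<mu> V (d j) n)" for j
    by (simp_all add: d_def)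
  have dl: "l2 (d j) \<and> l2sq (d j) \<le> (1/4) ^ j * L" for j
  proof (induction j)
    case 0 then show ?case using g by (simp add: d0 L_def)
  next
    case (Suc j)
    then have lj: "l2 (d j)" and bj: "l2sq (d j) \<le> (1/4) ^ j * L" by auto
    have "l2 (d (Suc j))" unfolding dS by (rule l2_uminus[OF K_l2(1)[OF mu V S lj]])
    moreover have "l2sq (d (Suc j)) \<le> (1/4) ^ Suc j * L"
    proof -
      have "l2sq (d (Suc j)) = l2sq (Kop m \<mu> V (d j))" unfolding dS by (rule l2sq_uminus)
      also have "\<dots> \<le> HSb m \<mu> V * l2sq (d j)" by (rule K_l2(2)[OF mu V S lj])
      also have "\<dots> \<le> 1/4 * l2sq (d j)" by (rule mult_right_mono[OF HS l2sq_nonneg])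
      also have "\<dots> \<le> 1/4 * ((1/4) ^ j * L)" using bj by simp
      finally show ?thesis by simp
    qed
    ultimately show ?case by simp
  qed
  have dpt: "cmod (d j n) \<le> (1/2) ^ j * sqrt L" for j n
  proof -
    have "(cmod (d j n))\<^sup>2 \<le> (1/4) ^ j * L" using l2_coord_le[of "d j" n] dl[of j] by auto
    then have "cmod (d j n) \<le> sqrt ((1/4) ^ j * L)" by (rule real_le_rsqrt)
    also have "sqrt ((1/4) ^ j * L) = (1/2) ^ j * sqrt L"
      by (simp add: real_sqrt_mult real_sqrt_power real_sqrt_divide)
    finally show ?thesis .
  qed
  have dpar: "\<not> P n \<Longrightarrow> d j n = 0" for j n
  proof (induction j arbitrary: n)
    case 0 then show ?case by (simp add: d0 par)
  next
    case (Suc j) then show ?case unfolding dS using Kpar[of "d j" n] by simp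
  qed
  have geo: "summable (\<lambda>j. (1/2::real) ^ j * sqrt L)"
    by (rule summable_mult2) (rule summable_geometric, simp)
  have sd: "summable (\<lambda>j. d j n)" for n
    by (rule summable_comparison_test'[OF geo, of 0]) (rule dpt)
  define h where "h n = (\<Sum>j. d j n)" for n
  define H where "H K = (\<lambda>n. \<Sum>j<K. d j n)" for K
  have Hl: "l2 (H K)" for K unfolding H_def by (rule l2_sum) (use dl in auto)
  have conv: "(\<lambda>K. H K n) \<longlonglongrightarrow> h n" for n
    unfolding H_def h_def by (rule summable_LIMSEQ[OF sd])
  have tail: "l2 (\<lambda>n. h n - H J n) \<and> l2sq (\<lambda>n. h n - H J n) \<le> 4 * (1/4) ^ J * L" for J
  proof -
    have lim: "(\<lambda>K. H (K + J) n - H J n) \<longlonglongrightarrow> h n - H J n" for n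
      by (rule tendsto_diff[OF LIMSEQ_ignore_initial_segment[OF conv] tendsto_const])
    have fl: "l2 (\<lambda>n. H (K + J) n - H J n)" for K by (rule l2_diff(1)[OF Hl Hl])
    have fb: "l2sq (\<lambda>n. H (K + J) n - H J n) \<le> 4 * (1/4) ^ J * L" for K
    proof -
      have eqH: "(\<lambda>n. H (K + J) n - H J n) = (\<lambda>n. \<Sum>j\<in>{J..<K + J}. d j n)"
        unfolding H_def by (rule ext) (metis le_add2 lessThan_atLeast0 sum_diff_nat_ivl zero_le)
      have "l2sq (\<lambda>n. \<Sum>j\<in>{J..<K + J}. d j n) \<le> (\<Sum>j\<in>{J..<K + J}. (1/2) ^ j) * (\<Sum>j\<in>{J..<K + J}. l2sq (d j) / (1/2) ^ j)"
        by (rule l2sq_sum_bound) (use dl in auto)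
      also have "\<dots> \<le> (2 * (1/2) ^ J) * (2 * (1/2) ^ J * L)"
      proof (rule mult_mono)
        show "(\<Sum>j\<in>{J..<K + J}. (1/2::real) ^ j) \<le> 2 * (1/2) ^ J" by (simp add: geom_tail)
        have "(\<Sum>j\<in>{J..<K + J}. l2sq (d j) / (1/2) ^ j) \<le> (\<Sum>j\<in>{J..<K + J}. (1/2) ^ j * L)"
        proof (rule sum_mono)
          fix j
          have "l2sq (d j) / (1/2) ^ j \<le> (1/4) ^ j * L / (1/2) ^ j"
            using dl[of j] by (intro divide_right_mono) auto
          also have "\<dots> = (1/2) ^ j * L"
          proof -
            have "(1/4::real) ^ j = (1/2)^j * (1/2)^j" by (simp add: power_mult_distrib[symmetric])
            then show ?thesis by simp
          qed
          finally show "l2sq (d j) / (1/2) ^ j \<le> (1/2) ^ j * L" .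
        qed
        also have "\<dots> = (\<Sum>j\<in>{J..<K + J}. (1/2) ^ j) * L" by (simp add: sum_distrib_right)
        also have "\<dots> \<le> (2 * (1/2) ^ J) * L" using L0 by (intro mult_right_mono) (simp_all add: geom_tail)
        finally show "(\<Sum>j\<in>{J..<K + J}. l2sq (d j) / (1/2) ^ j) \<le> 2 * (1/2) ^ J * L" .
      qed (use L0 l2sq_nonneg in \<open>auto intro!: sum_nonneg\<close>)
      also have "\<dots> = 4 * (1/4) ^ J * L"
      proof -
        have "(1/4::real) ^ J = (1/2)^J * (1/2)^J" by (simp add: power_mult_distrib[symmetric])
        then show ?thesis by simp
      qed
      finally show ?thesis unfolding eqH .
    qed
    show ?thesis using l2_limit[OF lim fl fb] by auto
  qed
  have hl: "l2 h" using tail[of 0] by (simp add: H_def)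
  have Kconv: "(\<lambda>K. Kop m \<mu> V (H K) n) \<longlonglongrightarrow> Kop m \<mu> V h n" for n
  proof -
    define c where "c = sqrt (hsrow m \<mu> V n / rho m \<mu> n * (4 * L))"
    have "(\<lambda>K. Kop m \<mu> V (H K) n - Kop m \<mu> V h n) \<longlonglongrightarrow> 0"
    proof (rule Lim_null_comparison)
      show "(\<lambda>K. c * (1/2) ^ K) \<longlonglongrightarrow> 0"
        by (intro tendsto_mult_right_zero LIMSEQ_power_zero) simp
      show "\<forall>\<^sub>F K in sequentially. norm (Kop m \<mu> V (H K) n - Kop m \<mu> V h n) \<le> c * (1/2) ^ K"
      proof (intro always_eventually allI)
        fix K
        have "Kop m \<mu> V (H K) n - Kop m \<mu> V h n = - Kop m \<mu> V (\<lambda>n. h n - H K n) n"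
          using K_diff_h[OF mu V hl Hl] by simp
        then have "norm (Kop m \<mu> V (H K) n - Kop m \<mu> V h n) = cmod (Kop m \<mu> V (\<lambda>n. h n - H K n) n)"
          by simp
        also have "\<dots> \<le> sqrt (hsrow m \<mu> V n / rho m \<mu> n * l2sq (\<lambda>n. h n - H K n))"
          using K_pointwise(2)[OF mu V, of "\<lambda>n. h n - H K n" n] tail[of K] by (intro real_le_rsqrt) auto
        also have "\<dots> \<le> sqrt (hsrow m \<mu> V n / rho m \<mu> n * (4 * (1/4) ^ K * L))"
          using tail[of K] hsrow_nonneg[OF mu, of m V n] rho_pos1[OF mu, of m n]
          by (intro real_sqrt_le_mono mult_left_mono) auto
        also have "\<dots> = c * (1/2) ^ K"
          unfolding c_def by (simp add: real_sqrt_mult real_sqrt_power real_sqrt_divide mult_ac)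
        finally show "norm (Kop m \<mu> V (H K) n - Kop m \<mu> V h n) \<le> c * (1/2) ^ K" .
      qed
    qed
    then have "(\<lambda>K. (Kop m \<mu> V (H K) n - Kop m \<mu> V h n) + Kop m \<mu> V h n) \<longlonglongrightarrow> 0 + Kop m \<mu> V h n"
      by (intro tendsto_add tendsto_const)
    then show ?thesis by simp
  qed
  have eqK: "H K n + Kop m \<mu> V (H K) n = g n - d K n" for K n
  proof -
    have "Kop m \<mu> V (H K) n = (\<Sum>j<K. Kop m \<mu> V (d j) n)"
      unfolding H_def by (rule K_sum_h[OF mu V]) (use dl in auto)
    also have "\<dots> = (\<Sum>j<K. - d (Suc j) n)" by (simp add: dS)
    finally have "H K n + Kop m \<mu> V (H K) n = (\<Sum>j<K. d j n - d (Suc j) n)"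
      unfolding H_def by (simp add: sum_subtractf sum_negf)
    also have "\<dots> = d 0 n - d K n" by (rule sum_lessThan_telescope')
    finally show ?thesis by (simp add: d0)
  qed
  have dlim: "(\<lambda>K. d K n) \<longlonglongrightarrow> 0" for n
  proof (rule Lim_null_comparison)
    show "(\<lambda>K. (1/2) ^ K * sqrt L) \<longlonglongrightarrow> 0"
      by (intro tendsto_mult_left_zero LIMSEQ_power_zero) simp
  qed (use dpt in auto)
  have sol: "h n + Kop m \<mu> V h n = g n" for n
  proof -
    have "(\<lambda>K. H K n + Kop m \<mu> V (H K) n) \<longlonglongrightarrow> h n + Kop m \<mu> V h n"
      by (intro tendsto_add conv Kconv)
    moreover have "(\<lambda>K. H K n + Kop m \<mu> V (H K) n) \<longlonglongrightarrow> g n - 0"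
      unfolding eqK by (intro tendsto_diff tendsto_const dlim)
    ultimately show ?thesis using LIMSEQ_unique by fastforce
  qed
  have hpar: "\<not> P n \<Longrightarrow> h n = 0" for n unfolding h_def using dpar by simp
  show ?thesis using hl sol hpar by blast
qed


lemma rho_ge_sq:
  assumes "m \<ge> 1"
  shows "rho m \<mu> n \<ge> real_of_int n ^ 2 + \<mu>"
proof -
  have "real_of_int n ^ 2 \<le> (pi * real_of_int \<bar>n\<bar>) ^ (2*m)"
  proof (cases "n = 0")
    case True then show ?thesis using assms by simp
  next
    case False
    then have a1: "real_of_int \<bar>n\<bar> \<ge> 1" by linarith
    have "real_of_int n ^ 2 = real_of_int \<bar>n\<bar> ^ 2" by simp
    also have "\<dots> \<le> real_of_int \<bar>n\<bar> ^ (2*m)" using assms a1 by (intro power_increasing) auto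
    also have "\<dots> \<le> (pi * real_of_int \<bar>n\<bar>) ^ (2*m)" by (rule pi_pow_ge) (use pi_gt3 in auto)
    finally show ?thesis .
  qed
  then show ?thesis unfolding rho_def by simp
qed

lemma ssum_small:
  fixes t :: real
  assumes m: "m \<ge> 1" and t: "t \<ge> 1"
  shows "(\<lambda>n. 1 / rho m (t\<^sup>2) n) summable_on UNIV" "Ssum m (t\<^sup>2) \<le> 8 / t"
proof -
  define G where "G k = 1 / (real k + t - 1/2)" for k :: nat
  define \<phi> where "\<phi> k = G k - G (Suc k)" for k
  have Gpos: "G k > 0" for k unfolding G_def using t by simp
  have tel: "(\<Sum>k<M. \<phi> k) \<le> 2 / t" for M
  proof -
    have "(\<Sum>k<M. \<phi> k) = G 0 - G M" unfolding \<phi>_def by (rule sum_lessThan_telescope')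
    also have "\<dots> \<le> G 0" using Gpos[of M] by simp
    also have "G 0 \<le> 2 / t" unfolding G_def using t by (simp add: field_simps)
    finally show ?thesis .
  qed
  have key: "1 / rho m (t\<^sup>2) n \<le> 2 * \<phi> (nat \<bar>n\<bar>)" for n
  proof -
    define a where "a = real_of_int \<bar>n\<bar> + t"
    have a1: "a \<ge> 1" unfolding a_def using t by simp
    have "a\<^sup>2 \<le> 2 * (real_of_int n ^ 2 + t\<^sup>2)" unfolding a_def
      using sum_squares_bound[of "real_of_int \<bar>n\<bar>" t] by (simp add: power2_eq_square algebra_simps)
    also have "\<dots> \<le> 2 * rho m (t\<^sup>2) n" using rho_ge_sq[OF m, where \<mu>="t\<^sup>2" and n=n] by simp
    finally have r: "a\<^sup>2 \<le> 2 * rho m (t\<^sup>2) n" .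
    have a2: "a\<^sup>2 \<ge> 1" using a1 by (simp add: one_le_power)
    have rp: "rho m (t\<^sup>2) n > 0" using r a2 by linarith
    have am: "a - 1/2 > 0" "a + 1/2 > 0" using a1 by auto
    have ph: "\<phi> (nat \<bar>n\<bar>) = 1 / (a - 1/2) - 1 / (a + 1/2)"
      unfolding \<phi>_def G_def a_def by (simp add: algebra_simps)
    also have "\<dots> = 1 / ((a - 1/2) * (a + 1/2))" using am by (simp add: field_simps)
    finally have ph2: "\<phi> (nat \<bar>n\<bar>) = 1 / ((a - 1/2) * (a + 1/2))" .
    have "(a - 1/2) * (a + 1/2) \<le> a\<^sup>2" by (simp add: power2_eq_square algebra_simps)
    then have "1 / a\<^sup>2 \<le> \<phi> (nat \<bar>n\<bar>)" unfolding ph2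
      using am by (intro divide_left_mono) auto
    moreover have "1 / rho m (t\<^sup>2) n \<le> 2 / a\<^sup>2"
    proof -
      have a0: "a\<^sup>2 > 0" using a2 by linarith
      have "1 / rho m (t\<^sup>2) n = 2 / (2 * rho m (t\<^sup>2) n)" using rp by simp
      also have "\<dots> \<le> 2 / a\<^sup>2" using r a0 rp by (intro divide_left_mono mult_pos_pos) auto
      finally show ?thesis .
    qed
    ultimately show ?thesis by simp
  qed
  have phnn: "\<phi> k \<ge> 0" for k unfolding \<phi>_def G_def using t by (simp add: frac_le)
  have half: "(\<Sum>n\<in>A. \<phi> (f n)) \<le> 2 / t" if fA: "finite A" and iA: "inj_on f A" for A and f :: "int \<Rightarrow> nat"
  proof -
    obtain M where M: "f ` A \<subseteq> {..<M}" using finite_nat_bounded[of "f ` A"] finite_imageI[OF fA, of f] by blast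
    have "(\<Sum>n\<in>A. \<phi> (f n)) = (\<Sum>k\<in>f ` A. \<phi> k)" by (rule sum.reindex[OF iA, symmetric, unfolded comp_def])
    also have "\<dots> \<le> (\<Sum>k<M. \<phi> k)" by (rule sum_mono2) (use M phnn in auto)
    also have "\<dots> \<le> 2 / t" by (rule tel)
    finally show ?thesis .
  qed
  have fin: "(\<Sum>n\<in>F. 1 / rho m (t\<^sup>2) n) \<le> 8 / t" if "finite F" for F
  proof -
    let ?P = "{n\<in>F. n \<ge> 0}" and ?N = "{n\<in>F. n < 0}"
    have "(\<Sum>n\<in>F. 1 / rho m (t\<^sup>2) n) \<le> (\<Sum>n\<in>F. 2 * \<phi> (nat \<bar>n\<bar>))" by (rule sum_mono) (rule key)
    also have "\<dots> = 2 * ((\<Sum>n\<in>?P. \<phi> (nat \<bar>n\<bar>)) + (\<Sum>n\<in>?N. \<phi> (nat \<bar>n\<bar>)))"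
    proof -
      have "F = ?P \<union> ?N" by auto
      then have "(\<Sum>n\<in>F. \<phi> (nat \<bar>n\<bar>)) = (\<Sum>n\<in>?P \<union> ?N. \<phi> (nat \<bar>n\<bar>))" by simp
      also have "\<dots> = (\<Sum>n\<in>?P. \<phi> (nat \<bar>n\<bar>)) + (\<Sum>n\<in>?N. \<phi> (nat \<bar>n\<bar>))"
        by (rule sum.union_disjoint) (use that in auto)
      finally show ?thesis by (simp add: sum_distrib_left[symmetric])
    qed
    also have "\<dots> \<le> 2 * (2 / t + 2 / t)"
      by (intro mult_left_mono add_mono half) (use that in \<open>auto simp: inj_on_def\<close>)
    finally show ?thesis by simp
  qed
  have nn: "1 / rho m (t\<^sup>2) n \<ge> 0" for n
  proof -
    have "rho m (t\<^sup>2) n \<ge> 0" using rho_ge_sq[OF m, where \<mu>="t\<^sup>2" and n=n]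
      by (metis add_nonneg_nonneg order_trans zero_le_power2)
    then show ?thesis by simp
  qed
  show "(\<lambda>n. 1 / rho m (t\<^sup>2) n) summable_on UNIV" "Ssum m (t\<^sup>2) \<le> 8 / t"
    using nonneg_sum_bound[of "\<lambda>n. 1 / rho m (t\<^sup>2) n", OF nn fin] unfolding Ssum_def by auto
qed


lemma powr_bracket: "bracket n powr (2 * real m) = bracket n ^ (2*m)"
proof -
  have "bracket n powr (2 * real m) = bracket n powr real (2*m)" by simp
  also have "\<dots> = bracket n ^ (2*m)" by (rule powr_realpow) (rule bracket_pos)
  finally show ?thesis .
qed

lemma powr_bracket_neg: "bracket n powr (2 * - real m) = 1 / bracket n ^ (2*m)"
proof -
  have "bracket n powr (2 * - real m) = inverse (bracket n powr (2 * real m))"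
    by (simp add: powr_minus[symmetric])
  then show ?thesis by (simp add: powr_bracket divide_inverse)
qed

lemma powr_bracket_neg2: "bracket n powr - (2 * real m) = 1 / bracket n ^ (2*m)"
  using powr_bracket_neg[of n m] by simp

lemma sob0_iff: "f \<in> sobolev pl 0 \<longleftrightarrow> (\<forall>n. f n \<noteq> 0 \<longrightarrow> parity_ok pl n) \<and> l2 f"
proof -
  have "bracket n powr (2 * 0) = 1" for n using bracket_pos[of n] by simp
  then show ?thesis unfolding sobolev_def l2_def by simp
qed

lemma sobneg: assumes "V \<in> sobolev True (- real m)"
  shows "wl2 m V" "\<And>k. V k \<noteq> 0 \<Longrightarrow> even k"
  using assms unfolding sobolev_def wl2_def parity_ok_def by (auto simp: powr_bracket_neg2)

lemma sob_norm_wsq: "sob_norm (- real m) f = sqrt (wsq m f)"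
  unfolding sob_norm_def wsq_def by (simp add: powr_bracket_neg2)

lemma sobm_iff:
  assumes mu: "\<mu> \<ge> 1"
  shows "u \<in> sobolev pl (real m) \<longleftrightarrow> (\<forall>n. u n \<noteq> 0 \<longrightarrow> parity_ok pl n) \<and> l2 (\<lambda>n. of_real (sqrt (rho m \<mu> n)) * u n)"
proof -
  have rp: "rho m \<mu> n > 0" for n using rho_pos1[OF mu] .
  have eq: "(cmod (of_real (sqrt (rho m \<mu> n)) * u n))\<^sup>2 = rho m \<mu> n * (cmod (u n))\<^sup>2" for n
    using rp[of n] by (simp add: norm_mult power_mult_distrib)
  have "(\<lambda>n. bracket n ^ (2*m) * (cmod (u n))\<^sup>2) summable_on UNIV \<longleftrightarrow> (\<lambda>n. rho m \<mu> n * (cmod (u n))\<^sup>2) summable_on UNIV"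
  proof
    assume s: "(\<lambda>n. bracket n ^ (2*m) * (cmod (u n))\<^sup>2) summable_on UNIV"
    show "(\<lambda>n. rho m \<mu> n * (cmod (u n))\<^sup>2) summable_on UNIV"
    proof (rule summable_on_comparison_test[OF summable_on_cmult_right[OF s, of "pi ^ (2*m) + \<mu>"]])
      fix n
      have "rho m \<mu> n * (cmod (u n))\<^sup>2 \<le> ((pi ^ (2*m) + \<mu>) * bracket n ^ (2*m)) * (cmod (u n))\<^sup>2"
        by (intro mult_right_mono rho_le_bracket) (use mu in auto)
      then show "rho m \<mu> n * (cmod (u n))\<^sup>2 \<le> (pi ^ (2*m) + \<mu>) * (bracket n ^ (2*m) * (cmod (u n))\<^sup>2)"
        by (simp add: mult_ac)
      show "0 \<le> rho m \<mu> n * (cmod (u n))\<^sup>2" using rp[of n] by simp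
    qed
  next
    assume s: "(\<lambda>n. rho m \<mu> n * (cmod (u n))\<^sup>2) summable_on UNIV"
    show "(\<lambda>n. bracket n ^ (2*m) * (cmod (u n))\<^sup>2) summable_on UNIV"
    proof (rule summable_on_comparison_test[OF summable_on_cmult_right[OF s, of "4 ^ m"]])
      fix n
      have "bracket n ^ (2*m) * (cmod (u n))\<^sup>2 \<le> (4 ^ m * rho m \<mu> n) * (cmod (u n))\<^sup>2"
        by (intro mult_right_mono bracket_le_rho mu) simp
      then show "bracket n ^ (2*m) * (cmod (u n))\<^sup>2 \<le> 4 ^ m * (rho m \<mu> n * (cmod (u n))\<^sup>2)"
        by (simp add: mult_ac)
      show "0 \<le> bracket n ^ (2*m) * (cmod (u n))\<^sup>2" using bracket_pos[of n] by simp
    qed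
  qed
  then show ?thesis unfolding sobolev_def l2_def eq by (simp add: powr_bracket)
qed

lemma fmult_K:
  assumes mu: "\<mu> \<ge> 1"
  shows "fmult V u n = of_real (sqrt (rho m \<mu> n)) * Kop m \<mu> V (\<lambda>l. of_real (sqrt (rho m \<mu> l)) * u l) n"
proof -
  have rp: "rho m \<mu> n > 0" for n using rho_pos1[OF mu] .
  have "(\<lambda>l. V (n - l) * (of_real (sqrt (rho m \<mu> l)) * u l) / of_real (sqrt (rho m \<mu> l))) = (\<lambda>l. V (n - l) * u l)"
  proof
    fix l have "rho m \<mu> l \<noteq> 0" using rp[of l] by simp
    then show "V (n - l) * (of_real (sqrt (rho m \<mu> l)) * u l) / of_real (sqrt (rho m \<mu> l)) = V (n - l) * u l"
      by simp
  qed
  moreover have "rho m \<mu> n \<noteq> 0" using rp[of n] by simp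
  ultimately show ?thesis unfolding Kop_def fmult_def by simp
qed

lemma Kpar:
  assumes V: "\<And>k. V k \<noteq> 0 \<Longrightarrow> even k" and f: "\<And>n. \<not> parity_ok pl n \<Longrightarrow> f n = 0"
    and n: "\<not> parity_ok pl n"
  shows "Kop m \<mu> V f n = 0"
proof -
  have "V (n - l) * f l / of_real (sqrt (rho m \<mu> l)) = 0" for l
  proof (cases "f l = 0")
    case False
    then have pl: "parity_ok pl l" using f by blast
    have "V (n - l) = 0"
    proof (rule ccontr)
      assume "V (n - l) \<noteq> 0"
      then have "even (n - l)" by (rule V)
      then have "parity_ok pl n" using pl unfolding parity_ok_def by (cases pl) auto
      then show False using n by simp
    qed
    then show ?thesis by simp
  qed simp
  then have "(\<lambda>l. V (n - l) * f l / of_real (sqrt (rho m \<mu> l))) = (\<lambda>l. 0)" by (rule ext)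
  then show ?thesis unfolding Kop_def by simp
qed

lemma Dpow_rho: "Dpow m u n + of_real \<mu> * u n = of_real (rho m \<mu> n) * u n"
  unfolding Dpow_def rho_def by (simp add: algebra_simps)

lemma HSb_nonneg: "\<mu> \<ge> 1 \<Longrightarrow> HSb m \<mu> V \<ge> 0"
  unfolding HSb_def using hsrow_nonneg rho_pos1
  by (intro infsum_nonneg divide_nonneg_pos) auto


lemma l2_div_rho:
  assumes mu: "\<mu> \<ge> 1" and h: "l2 h"
  shows "l2 (\<lambda>n. h n / of_real (sqrt (rho m \<mu> n)))" "l2sq (\<lambda>n. h n / of_real (sqrt (rho m \<mu> n))) \<le> l2sq h / \<mu>"
proof -
  have rp: "rho m \<mu> n > 0" for n using rho_pos1[OF mu] .
  have pw: "(cmod (h n / of_real (sqrt (rho m \<mu> n))))\<^sup>2 \<le> (1/\<mu>) * (cmod (h n))\<^sup>2" for n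
  proof -
    have "(cmod (h n / of_real (sqrt (rho m \<mu> n))))\<^sup>2 = (cmod (h n))\<^sup>2 / rho m \<mu> n"
      using rp[of n] by (simp add: norm_divide power_divide)
    also have "\<dots> \<le> (cmod (h n))\<^sup>2 / \<mu>" using rho_ge[of \<mu> m n] mu by (intro divide_left_mono) auto
    finally show ?thesis by simp
  qed
  have s: "(\<lambda>n. (1/\<mu>) * (cmod (h n))\<^sup>2) summable_on UNIV"
    using h unfolding l2_def by (rule summable_on_cmult_right)
  show l: "l2 (\<lambda>n. h n / of_real (sqrt (rho m \<mu> n)))" unfolding l2_def
    by (rule summable_on_comparison_test[OF s pw]) simp
  have "l2sq (\<lambda>n. h n / of_real (sqrt (rho m \<mu> n))) \<le> (\<Sum>\<^sub>\<infinity>n. (1/\<mu>) * (cmod (h n))\<^sup>2)"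
    unfolding l2sq_def[of "\<lambda>n. h n / of_real (sqrt (rho m \<mu> n))"]
    by (rule infsum_mono[OF l[unfolded l2_def] s pw])
  also have "\<dots> = (1/\<mu>) * l2sq h" unfolding l2sq_def by (rule infsum_cmult_right')
  also have "\<dots> = l2sq h / \<mu>" by simp
  finally show "l2sq (\<lambda>n. h n / of_real (sqrt (rho m \<mu> n))) \<le> l2sq h / \<mu>" .
qed

lemma div_le_self_real: "0 \<le> x \<Longrightarrow> 1 \<le> \<mu> \<Longrightarrow> x / \<mu> \<le> (x::real)"
proof -
  assume a: "0 \<le> x" "1 \<le> \<mu>"
  have "x \<le> x * \<mu>" using mult_left_mono[OF a(2) a(1)] by simp
  then show ?thesis using a by (simp add: divide_le_eq)
qed

lemma pnorm_pair: "pnorm (a, b) = sqrt (l2sq a + l2sq b)"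
  unfolding pnorm_def by simp

lemma dist_to_le: "y \<in> N \<Longrightarrow> dist_to x N \<le> pnorm (pdiff x y)"
proof -
  assume y: "y \<in> N"
  have "pnorm (pdiff x y) \<in> {pnorm (pdiff x y) | y. y \<in> N}" using y by blast
  moreover have "bdd_below {pnorm (pdiff x y) | y. y \<in> N}"
    by (rule bdd_belowI[where m=0]) (auto simp: pnorm_def intro!: add_nonneg_nonneg l2sq_nonneg)
  ultimately show ?thesis unfolding dist_to_def by (rule cInf_lower)
qed

lemma gap_one:
  assumes mu: "\<mu> \<ge> 1" and S: "(\<lambda>n. 1 / rho m \<mu> n) summable_on UNIV"
    and V1: "V1 \<in> sobolev True (- real m)" and V2: "V2 \<in> sobolev True (- real m)"
    and H1: "HSb m \<mu> V1 \<le> 1/4" and H2: "HSb m \<mu> V2 \<le> 1/4"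
    and x: "x \<in> S_graph pl m V1" and nx: "pnorm x = 1"
  shows "dist_to x (S_graph pl m V2) \<le> sqrt (32 * (1 + \<mu>\<^sup>2)\<^sup>2 * HSb m \<mu> (\<lambda>k. V2 k - V1 k))"
proof -
  have rp: "rho m \<mu> n > 0" for n using rho_pos1[OF mu] .
  have rnz: "rho m \<mu> n \<noteq> 0" for n using rp[of n] by simp
  have sq: "of_real (sqrt (rho m \<mu> n)) * of_real (sqrt (rho m \<mu> n)) = (of_real (rho m \<mu> n) :: complex)" for n
    using rp[of n] by (simp flip: of_real_mult)
  have wV1: "wl2 m V1" and wV2: "wl2 m V2" using sobneg V1 V2 by auto
  have eV1: "\<And>k. V1 k \<noteq> 0 \<Longrightarrow> even k" and eV2: "\<And>k. V2 k \<noteq> 0 \<Longrightarrow> even k" using sobneg V1 V2 by auto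
  define D where "D = (\<lambda>k. V2 k - V1 k)"
  have wD: "wl2 m D" unfolding D_def by (rule wl2_diff[OF wV2 wV1])
  obtain u where xu: "x = (u, \<lambda>n. Dpow m u n + fmult V1 u n)" and u: "u \<in> S_dom pl m V1"
    using x unfolding S_graph_def by blast
  define T1 where "T1 = (\<lambda>n. Dpow m u n + fmult V1 u n)"
  define hu where "hu = (\<lambda>n. of_real (sqrt (rho m \<mu> n)) * u n)"
  have um: "u \<in> sobolev pl (real m)" and T10: "T1 \<in> sobolev pl 0" using u unfolding S_dom_def T1_def by auto
  have upar: "\<And>n. u n \<noteq> 0 \<Longrightarrow> parity_ok pl n" and hul: "l2 hu"
    using um[unfolded sobm_iff[OF mu]] unfolding hu_def by auto
  have T1par: "\<And>n. T1 n \<noteq> 0 \<Longrightarrow> parity_ok pl n" and T1l: "l2 T1" using T10[unfolded sob0_iff] by auto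
  have u_eq: "u = (\<lambda>n. hu n / of_real (sqrt (rho m \<mu> n)))"
    unfolding hu_def by (auto simp: rnz)
  have ul: "l2 u" and ub: "l2sq u \<le> l2sq hu / \<mu>" using l2_div_rho[OF mu hul, where m=m] unfolding u_eq[symmetric] by auto
  have norm1: "l2sq u + l2sq T1 = 1"
  proof -
    have "sqrt (l2sq u + l2sq T1) = 1" using nx unfolding xu T1_def[symmetric] pnorm_pair .
    then show ?thesis by simp
  qed
  define f where "f = (\<lambda>n. T1 n + of_real \<mu> * u n)"
  have fl: "l2 f" unfolding f_def by (rule l2_add(1)[OF T1l l2_cmult[OF ul]])
  have fb: "l2sq f \<le> 2 * (1 + \<mu>\<^sup>2)"
  proof -
    have "l2sq f \<le> 2 * l2sq T1 + 2 * l2sq (\<lambda>n. of_real \<mu> * u n)"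
      unfolding f_def by (rule l2_add(2)[OF T1l l2_cmult[OF ul]])
    also have "l2sq (\<lambda>n. of_real \<mu> * u n) = \<mu>\<^sup>2 * l2sq u" by (simp add: l2sq_cmult)
    finally have "l2sq f \<le> 2 * l2sq T1 + 2 * (\<mu>\<^sup>2 * l2sq u)" .
    also have "\<dots> \<le> 2 * (1 + \<mu>\<^sup>2) * (l2sq u + l2sq T1)"
      using l2sq_nonneg[of u] l2sq_nonneg[of T1] by (simp add: algebra_simps)
    finally show ?thesis using norm1 by simp
  qed
  have fpar: "\<not> parity_ok pl n \<Longrightarrow> f n = 0" for n
  proof -
    assume "\<not> parity_ok pl n"
    then have "u n = 0" "T1 n = 0" using upar T1par by blast+
    then show "f n = 0" unfolding f_def by simp
  qed
  define g where "g = (\<lambda>n. f n / of_real (sqrt (rho m \<mu> n)))"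
  have gl: "l2 g" and gb: "l2sq g \<le> l2sq f / \<mu>" unfolding g_def using l2_div_rho[OF mu fl, where m=m] by auto
  have gpar: "\<And>n. \<not> parity_ok pl n \<Longrightarrow> g n = 0" unfolding g_def using fpar by simp
  have fK: "f n = of_real (sqrt (rho m \<mu> n)) * (hu n + Kop m \<mu> V1 hu n)" for n
  proof -
    have "f n = (Dpow m u n + of_real \<mu> * u n) + fmult V1 u n" unfolding f_def T1_def by simp
    also have "\<dots> = of_real (rho m \<mu> n) * u n + of_real (sqrt (rho m \<mu> n)) * Kop m \<mu> V1 hu n"
      unfolding Dpow_rho fmult_K[OF mu, of V1 u n m] hu_def ..
    also have "\<dots> = of_real (sqrt (rho m \<mu> n)) * (hu n + Kop m \<mu> V1 hu n)"
      unfolding hu_def by (simp add: algebra_simps sq[symmetric])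
    finally show ?thesis .
  qed
  have hu_eq: "hu n + Kop m \<mu> V1 hu n = g n" for n
    unfolding g_def fK using rnz[of n] by simp
  have hub: "l2sq hu \<le> 4 * l2sq g" by (rule apriori[OF mu wV1 S H1 hul gl hu_eq])
  obtain hw where hwl: "l2 hw" and hw_eq: "\<And>n. hw n + Kop m \<mu> V2 hw n = g n"
      and hwpar: "\<And>n. \<not> parity_ok pl n \<Longrightarrow> hw n = 0"
    using existence[OF mu wV2 S H2 gl, of "parity_ok pl"] gpar Kpar[OF eV2] by blast
  define w where "w = (\<lambda>n. hw n / of_real (sqrt (rho m \<mu> n)))"
  have hw_w: "(\<lambda>n. of_real (sqrt (rho m \<mu> n)) * w n) = hw"
    unfolding w_def using rnz by auto
  have wl: "l2 w" unfolding w_def using l2_div_rho[OF mu hwl, where m=m] by auto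
  have wpar: "\<And>n. \<not> parity_ok pl n \<Longrightarrow> w n = 0" unfolding w_def using hwpar by simp
  have wm: "w \<in> sobolev pl (real m)" unfolding sobm_iff[OF mu] hw_w using hwl wpar by blast
  define T2 where "T2 = (\<lambda>n. Dpow m w n + fmult V2 w n)"
  have T2_eq: "T2 n = f n - of_real \<mu> * w n" for n
  proof -
    have "T2 n + of_real \<mu> * w n = (Dpow m w n + of_real \<mu> * w n) + fmult V2 w n" unfolding T2_def by simp
    also have "\<dots> = of_real (rho m \<mu> n) * w n + of_real (sqrt (rho m \<mu> n)) * Kop m \<mu> V2 hw n"
      unfolding Dpow_rho fmult_K[OF mu, of V2 w n m] hw_w ..
    also have "\<dots> = of_real (sqrt (rho m \<mu> n)) * (hw n + Kop m \<mu> V2 hw n)"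
      unfolding hw_w[symmetric] by (simp add: algebra_simps sq[symmetric])
    also have "\<dots> = f n" unfolding hw_eq g_def using rnz[of n] by simp
    finally show ?thesis by (simp add: algebra_simps)
  qed
  have T2l: "l2 T2" unfolding T2_eq[abs_def] by (rule l2_diff(1)[OF fl l2_cmult[OF wl]])
  have T2par: "\<And>n. \<not> parity_ok pl n \<Longrightarrow> T2 n = 0" unfolding T2_eq using fpar wpar by simp
  have T20: "T2 \<in> sobolev pl 0" unfolding sob0_iff using T2l T2par by blast
  have yN: "(w, T2) \<in> S_graph pl m V2"
    unfolding S_graph_def S_dom_def T2_def using wm T20[unfolded T2_def] by blast
  define e where "e = (\<lambda>n. u n - w n)"
  define he where "he = (\<lambda>n. hu n - hw n)"
  have hel: "l2 he" unfolding he_def by (rule l2_diff(1)[OF hul hwl])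
  have e_eq: "e = (\<lambda>n. he n / of_real (sqrt (rho m \<mu> n)))"
    unfolding e_def he_def hu_def w_def by (rule ext) (simp add: rnz diff_divide_distrib)
  have eb: "l2sq e \<le> l2sq he / \<mu>" using l2_div_rho(2)[OF mu hel, where m=m] unfolding e_eq[symmetric] .
  have pd: "pdiff x (w, T2) = (e, \<lambda>n. (- of_real \<mu>) * e n)"
    unfolding xu pdiff_def T1_def[symmetric] e_def by (auto simp: T2_eq f_def algebra_simps)
  have he_eq: "he n + Kop m \<mu> V2 he n = Kop m \<mu> D hu n" for n
  proof -
    have "he n + Kop m \<mu> V2 he n = (hu n + Kop m \<mu> V2 hu n) - (hw n + Kop m \<mu> V2 hw n)"
      unfolding he_def K_diff_h[OF mu wV2 hul hwl] by simp
    also have "\<dots> = Kop m \<mu> V2 hu n - Kop m \<mu> V1 hu n"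
      unfolding hw_eq hu_eq[symmetric] by simp
    also have "\<dots> = Kop m \<mu> D hu n" unfolding D_def by (rule K_diff_V[OF mu wV2 wV1 hul, symmetric])
    finally show ?thesis .
  qed
  have KDl: "l2 (Kop m \<mu> D hu)" by (rule K_l2(1)[OF mu wD S hul])
  have heb: "l2sq he \<le> 4 * l2sq (Kop m \<mu> D hu)" by (rule apriori[OF mu wV2 S H2 hel KDl he_eq])
  have KDb: "l2sq (Kop m \<mu> D hu) \<le> HSb m \<mu> D * l2sq hu" by (rule K_l2(2)[OF mu wD S hul])
  have HD0: "HSb m \<mu> D \<ge> 0" by (rule HSb_nonneg[OF mu])
  have mu0: "\<mu> > 0" using mu by simp
  have gf: "l2sq g \<le> l2sq f" using gb div_le_self_real[OF l2sq_nonneg[of f] mu] by linarith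
  have hh: "l2sq he / \<mu> \<le> l2sq he" by (rule div_le_self_real[OF l2sq_nonneg mu])
  have "l2sq e \<le> 32 * (1 + \<mu>\<^sup>2) * HSb m \<mu> D"
  proof -
    have "l2sq e \<le> l2sq he" using eb hh by linarith
    also have "\<dots> \<le> 4 * (HSb m \<mu> D * l2sq hu)" using heb KDb by linarith
    also have "\<dots> \<le> 4 * (HSb m \<mu> D * (4 * l2sq g))" using hub HD0 by (intro mult_left_mono) auto
    also have "\<dots> \<le> 4 * (HSb m \<mu> D * (4 * (2 * (1 + \<mu>\<^sup>2))))"
      using fb gf HD0 by (intro mult_left_mono) auto
    also have "\<dots> = 32 * (1 + \<mu>\<^sup>2) * HSb m \<mu> D" by (simp add: algebra_simps)
    finally show ?thesis .
  qed
  have "dist_to x (S_graph pl m V2) \<le> pnorm (pdiff x (w, T2))" by (rule dist_to_le[OF yN])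
  also have "\<dots> = sqrt ((1 + \<mu>\<^sup>2) * l2sq e)"
    unfolding pd pnorm_pair l2sq_cmult by (simp add: algebra_simps)
  also have "\<dots> \<le> sqrt ((1 + \<mu>\<^sup>2) * (32 * (1 + \<mu>\<^sup>2) * HSb m \<mu> D))"
    by (intro real_sqrt_le_mono mult_left_mono \<open>l2sq e \<le> 32 * (1 + \<mu>\<^sup>2) * HSb m \<mu> D\<close>) simp
  also have "\<dots> = sqrt (32 * (1 + \<mu>\<^sup>2)\<^sup>2 * HSb m \<mu> D)" by (simp add: power2_eq_square mult_ac)
  finally show ?thesis unfolding D_def .
qed


lemma gap_dir_le:
  assumes "\<And>x. x \<in> M \<Longrightarrow> pnorm x = 1 \<Longrightarrow> dist_to x N \<le> b" and "0 \<le> b"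
  shows "gap_dir M N \<le> b" "0 \<le> gap_dir M N"
proof -
  have le: "z \<le> b" if "z \<in> insert 0 {dist_to x N | x. x \<in> M \<and> pnorm x = 1}" for z
    using that assms by auto
  show "gap_dir M N \<le> b" unfolding gap_dir_def by (rule cSup_least) (use le in auto)
  show "0 \<le> gap_dir M N" unfolding gap_dir_def
    by (rule cSup_upper) (auto intro!: bdd_aboveI[where M=b] le)
qed

lemma infsum_2add:
  fixes f g :: "'a \<Rightarrow> real"
  assumes "f summable_on UNIV" "g summable_on UNIV"
  shows "(\<Sum>\<^sub>\<infinity>n. 2 * f n + 2 * g n) = 2 * infsum f UNIV + 2 * infsum g UNIV"
proof -
  have "(\<Sum>\<^sub>\<infinity>n. 2 * f n + 2 * g n) = (\<Sum>\<^sub>\<infinity>n. 2 * f n) + (\<Sum>\<^sub>\<infinity>n. 2 * g n)"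
    by (rule infsum_add) (use assms in \<open>auto intro: summable_on_cmult_right\<close>)
  also have "\<dots> = 2 * infsum f UNIV + 2 * infsum g UNIV" by (simp add: infsum_cmult_right')
  finally show ?thesis .
qed

lemma wsq_add:
  assumes "wl2 m a" "wl2 m b"
  shows "wsq m (\<lambda>n. a n + b n) \<le> 2 * wsq m a + 2 * wsq m b"
proof -
  have s: "(\<lambda>n. 2 * ((cmod (a n))\<^sup>2 / bracket n ^ (2*m)) + 2 * ((cmod (b n))\<^sup>2 / bracket n ^ (2*m))) summable_on UNIV"
    using assms unfolding wl2_def by (intro summable_on_add summable_on_cmult_right) auto
  have pw: "(cmod (a n + b n))\<^sup>2 / bracket n ^ (2*m) \<le> 2 * ((cmod (a n))\<^sup>2 / bracket n ^ (2*m)) + 2 * ((cmod (b n))\<^sup>2 / bracket n ^ (2*m))" for n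
  proof -
    have bp: "bracket n ^ (2*m) > 0" using bracket_pos[of n] by simp
    have "(cmod (a n + b n))\<^sup>2 / bracket n ^ (2*m) \<le> (2 * (cmod (a n))\<^sup>2 + 2 * (cmod (b n))\<^sup>2) / bracket n ^ (2*m)"
      using sq_add_le[of "a n" "b n"] bp by (intro divide_right_mono) auto
    also have "\<dots> = 2 * ((cmod (a n))\<^sup>2 / bracket n ^ (2*m)) + 2 * ((cmod (b n))\<^sup>2 / bracket n ^ (2*m))"
      by (simp add: add_divide_distrib)
    finally show ?thesis .
  qed
  have sl: "(\<lambda>n. (cmod (a n + b n))\<^sup>2 / bracket n ^ (2*m)) summable_on UNIV"
    by (rule summable_on_comparison_test[OF s pw]) (simp add: bracket_pos)
  have "wsq m (\<lambda>n. a n + b n) \<le> (\<Sum>\<^sub>\<infinity>n. 2 * ((cmod (a n))\<^sup>2 / bracket n ^ (2*m)) + 2 * ((cmod (b n))\<^sup>2 / bracket n ^ (2*m)))"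
    unfolding wsq_def[of m "\<lambda>n. a n + b n"] by (rule infsum_mono[OF sl s pw])
  also have "\<dots> = 2 * wsq m a + 2 * wsq m b"
    unfolding wsq_def by (rule infsum_2add) (use assms in \<open>auto simp: wl2_def\<close>)
  finally show ?thesis .
qed

lemma wsq_swap: "wsq m (\<lambda>n. a n - b n) = wsq m (\<lambda>n. b n - a n)"
  unfolding wsq_def by (simp add: norm_minus_commute)

theorem proposition3:
  fixes m :: nat and Vs :: "nat \<Rightarrow> int \<Rightarrow> complex" and V :: "int \<Rightarrow> complex"
    and pl :: bool
  assumes "m \<ge> 1"
    and "\<And>k. Vs k \<in> sobolev True (- real m)"
    and "V \<in> sobolev True (- real m)"
    and "(\<lambda>k. sob_norm (- real m) (\<lambda>n. Vs k n - V n)) \<longlonglongrightarrow> 0"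
  shows "(\<lambda>k. gap (S_graph pl m (Vs k)) (S_graph pl m V)) \<longlonglongrightarrow> 0"
proof -
  note m = assms(1) and Vsk = assms(2) and Vs = assms(3) and lim = assms(4)
  have wV: "wl2 m V" using sobneg(1)[OF Vs] .
  have wVs: "wl2 m (Vs k)" for k using sobneg(1)[OF Vsk[of k]] .
  define W where "W = wsq m V"
  have W0: "W \<ge> 0" unfolding W_def by (rule wsq_nonneg)
  define t where "t = max 1 (64 * 4 ^ m * (2 * W + 2))"
  have t1: "t \<ge> 1" unfolding t_def by simp
  define \<mu> where "\<mu> = t\<^sup>2"
  have mu: "\<mu> \<ge> 1" unfolding \<mu>_def using t1 by (simp add: one_le_power)
  have S: "(\<lambda>n. 1 / rho m \<mu> n) summable_on UNIV" and Ss: "Ssum m \<mu> \<le> 8 / t"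
    unfolding \<mu>_def using ssum_small[OF m t1] by auto
  have Ss0: "Ssum m \<mu> \<ge> 0" unfolding Ssum_def using rho_pos1[OF mu]
    by (intro infsum_nonneg) (simp add: less_imp_le)
  define B where "B = 2 * 4 ^ m * Ssum m \<mu>"
  have B0: "B \<ge> 0" unfolding B_def using Ss0 by simp
  have HSB: "HSb m \<mu> X \<le> B * wsq m X" if "wl2 m X" for X
    using HSb_bound(2)[OF mu that S] unfolding B_def by (simp add: mult_ac)
  have Bsmall: "B * (2 * W + 2) \<le> 1/4"
  proof -
    have "B \<le> 2 * 4 ^ m * (8 / t)" unfolding B_def using Ss by (intro mult_left_mono) auto
    then have "B * (2 * W + 2) \<le> 2 * 4 ^ m * (8 / t) * (2 * W + 2)"
      using W0 by (intro mult_right_mono) auto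
    also have "\<dots> = 16 * 4 ^ m * (2 * W + 2) / t" by simp
    also have "\<dots> \<le> 1/4"
    proof -
      have "64 * 4 ^ m * (2 * W + 2) \<le> t" unfolding t_def by simp
      then show ?thesis using t1 by (simp add: divide_le_eq)
    qed
    finally show ?thesis .
  qed
  define C where "C = sqrt (32 * (1 + \<mu>\<^sup>2)\<^sup>2 * B)"
  define \<delta> where "\<delta> k = sob_norm (- real m) (\<lambda>n. Vs k n - V n)" for k
  have wd: "wsq m (\<lambda>n. Vs k n - V n) = (\<delta> k)\<^sup>2" for k
    unfolding \<delta>_def sob_norm_wsq using wsq_nonneg by simp
  have d0: "\<delta> k \<ge> 0" for k unfolding \<delta>_def sob_norm_wsq using wsq_nonneg by simp
  have ev: "\<forall>\<^sub>F k in sequentially. \<delta> k < 1"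
    using lim[unfolded \<delta>_def[symmetric, abs_def]] by (rule order_tendstoD) simp
  have bound: "\<bar>gap (S_graph pl m (Vs k)) (S_graph pl m V)\<bar> \<le> C * \<delta> k" if dk: "\<delta> k < 1" for k
  proof -
    have wD: "wl2 m (\<lambda>n. Vs k n - V n)" by (rule wl2_diff[OF wVs wV])
    have wDsmall: "wsq m (\<lambda>n. Vs k n - V n) \<le> 1"
      unfolding wd using dk d0[of k] by (simp add: power_le_one)
    have "wsq m (Vs k) = wsq m (\<lambda>n. V n + (Vs k n - V n))" by simp
    also have "\<dots> \<le> 2 * wsq m V + 2 * wsq m (\<lambda>n. Vs k n - V n)" by (rule wsq_add[OF wV wD])
    finally have wVsk: "wsq m (Vs k) \<le> 2 * W + 2" using wDsmall unfolding W_def by linarith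
    have H1: "HSb m \<mu> (Vs k) \<le> 1/4"
    proof -
      have "HSb m \<mu> (Vs k) \<le> B * wsq m (Vs k)" by (rule HSB[OF wVs])
      also have "\<dots> \<le> B * (2 * W + 2)" using wVsk B0 by (intro mult_left_mono)
      finally show ?thesis using Bsmall by linarith
    qed
    have H2: "HSb m \<mu> V \<le> 1/4"
    proof -
      have "HSb m \<mu> V \<le> B * W" unfolding W_def by (rule HSB[OF wV])
      also have "\<dots> \<le> B * (2 * W + 2)" using W0 B0 by (intro mult_left_mono) auto
      finally show ?thesis using Bsmall by linarith
    qed
    have HD1: "HSb m \<mu> (\<lambda>n. V n - Vs k n) \<le> B * (\<delta> k)\<^sup>2"
    proof -
      have "HSb m \<mu> (\<lambda>n. V n - Vs k n) \<le> B * wsq m (\<lambda>n. V n - Vs k n)" by (rule HSB[OF wl2_diff[OF wV wVs]])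
      also have "wsq m (\<lambda>n. V n - Vs k n) = (\<delta> k)\<^sup>2" using wd wsq_swap by metis
      finally show ?thesis .
    qed
    have HD2: "HSb m \<mu> (\<lambda>n. Vs k n - V n) \<le> B * (\<delta> k)\<^sup>2"
      using HSB[OF wD] unfolding wd .
    have Cd: "sqrt (32 * (1 + \<mu>\<^sup>2)\<^sup>2 * (B * (\<delta> k)\<^sup>2)) = C * \<delta> k"
      unfolding C_def using d0[of k] by (simp add: real_sqrt_mult mult_ac)
    have CD0: "0 \<le> C * \<delta> k" unfolding C_def using d0[of k] B0 by simp
    have g1: "gap_dir (S_graph pl m (Vs k)) (S_graph pl m V) \<le> C * \<delta> k"
      "0 \<le> gap_dir (S_graph pl m (Vs k)) (S_graph pl m V)"
    proof -
      have "dist_to x (S_graph pl m V) \<le> C * \<delta> k" if "x \<in> S_graph pl m (Vs k)" "pnorm x = 1" for x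
      proof -
        have "dist_to x (S_graph pl m V) \<le> sqrt (32 * (1 + \<mu>\<^sup>2)\<^sup>2 * HSb m \<mu> (\<lambda>n. V n - Vs k n))"
          by (rule gap_one[OF mu S Vsk Vs H1 H2 that])
        also have "\<dots> \<le> sqrt (32 * (1 + \<mu>\<^sup>2)\<^sup>2 * (B * (\<delta> k)\<^sup>2))"
          using HD1 by (intro real_sqrt_le_mono mult_left_mono) auto
        finally show ?thesis unfolding Cd .
      qed
      then show "gap_dir (S_graph pl m (Vs k)) (S_graph pl m V) \<le> C * \<delta> k"
        "0 \<le> gap_dir (S_graph pl m (Vs k)) (S_graph pl m V)"
        using gap_dir_le[OF _ CD0] by blast+
    qed
    have g2: "gap_dir (S_graph pl m V) (S_graph pl m (Vs k)) \<le> C * \<delta> k"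
      "0 \<le> gap_dir (S_graph pl m V) (S_graph pl m (Vs k))"
    proof -
      have "dist_to x (S_graph pl m (Vs k)) \<le> C * \<delta> k" if "x \<in> S_graph pl m V" "pnorm x = 1" for x
      proof -
        have "dist_to x (S_graph pl m (Vs k)) \<le> sqrt (32 * (1 + \<mu>\<^sup>2)\<^sup>2 * HSb m \<mu> (\<lambda>n. Vs k n - V n))"
          by (rule gap_one[OF mu S Vs Vsk H2 H1 that])
        also have "\<dots> \<le> sqrt (32 * (1 + \<mu>\<^sup>2)\<^sup>2 * (B * (\<delta> k)\<^sup>2))"
          using HD2 by (intro real_sqrt_le_mono mult_left_mono) auto
        finally show ?thesis unfolding Cd .
      qed
      then show "gap_dir (S_graph pl m V) (S_graph pl m (Vs k)) \<le> C * \<delta> k"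
        "0 \<le> gap_dir (S_graph pl m V) (S_graph pl m (Vs k))"
        using gap_dir_le[OF _ CD0] by blast+
    qed
    show ?thesis unfolding gap_def using g1 g2 by auto
  qed
  have "(\<lambda>k. C * \<delta> k) \<longlonglongrightarrow> C * 0"
    by (intro tendsto_mult tendsto_const) (use lim in \<open>simp add: \<delta>_def[abs_def]\<close>)
  then have Cl: "(\<lambda>k. C * \<delta> k) \<longlonglongrightarrow> 0" by simp
  show ?thesis
  proof (rule Lim_null_comparison[OF _ Cl])
    show "\<forall>\<^sub>F k in sequentially. norm (gap (S_graph pl m (Vs k)) (S_graph pl m V)) \<le> C * \<delta> k"
      using ev by eventually_elim (simp add: bound)
  qed
qed


end
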